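(* For every $m\ge0$, the algebra of $\mathfrak{gl}^M$-module endomorphisms of $(V^*/V_* )^{\otimes m}$ is isomorphic to the group algebra $\mathbb{K}[S_m]$ of the symmetric group $S_m$ (acting by permuting tensorands).
   Context: $\mathbb{K}$ is a field of characteristic $0$; $V,V_*$ countably infinite-dimensional with a nondegenerate pairing $\mathrm{p}:V\otimes V_*\to\mathbb{K}$, $V_*\subseteq V^*=\mathrm{Hom}_{\mathbb{K}}(V,\mathbb{K})$ via $\mathrm{p}$; $\mathfrak{gl}^M=\{\varphi\in\mathrm{End}_{\mathbb{K}}(V)\mid\varphi^*(V_* )\subseteq V_*\}$, acting on $V^*/V_*$ via the dual action. *)

theory Defs
  imports Main "HOL.Vector_Spaces" "HOL-Library.Function_Algebras" "HOL-Library.Countable_Set" "HOL-Combinatorics.Permutations"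
begin

definition fscale :: "'k::field \<Rightarrow> ('v \<Rightarrow> 'k) \<Rightarrow> ('v \<Rightarrow> 'k)" where
  "fscale c f = (\<lambda>x. c * f x)"

definition alg_dual :: "('k::field \<Rightarrow> 'v::ab_group_add \<Rightarrow> 'v) \<Rightarrow> ('v \<Rightarrow> 'k) set" where
  "alg_dual sV = {f. Vector_Spaces.linear sV (*) f}"

text \<open>Standing assumptions: V is a countably infinite-dimensional K-vector space, and
  V_* (given as a subspace W of V^*) is countably infinite-dimensional and the pairing
  V x V_* -> K, (v,f) |-> f v, is nondegenerate.\<close>
definition mackey_pair :: "('k::field \<Rightarrow> 'v::ab_group_add \<Rightarrow> 'v) \<Rightarrow> ('v \<Rightarrow> 'k) set \<Rightarrow> bool" where
  "mackey_pair sV W \<longleftrightarrow>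
     vector_space sV \<and>
     (\<exists>B. \<not> module.dependent sV B \<and> module.span sV B = UNIV \<and> countable B \<and> infinite B) \<and>
     W \<subseteq> alg_dual sV \<and> module.subspace fscale W \<and>
     (\<exists>C. C \<subseteq> W \<and> \<not> module.dependent fscale C \<and> module.span fscale C = W \<and> countable C \<and> infinite C) \<and>
     (\<forall>v. v \<noteq> 0 \<longrightarrow> (\<exists>f\<in>W. f v \<noteq> 0)) \<and>
     (\<forall>f\<in>W. f \<noteq> 0 \<longrightarrow> (\<exists>v. f v \<noteq> 0))"

definition glM :: "('k::field \<Rightarrow> 'v::ab_group_add \<Rightarrow> 'v) \<Rightarrow> ('v \<Rightarrow> 'k) set \<Rightarrow> ('v \<Rightarrow> 'v) set" where
  "glM sV W = {\<phi>. Vector_Spaces.linear sV sV \<phi> \<and> (\<forall>f\<in>W. f \<circ> \<phi> \<in> W)}"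

definition dact :: "('v \<Rightarrow> 'v) \<Rightarrow> ('v \<Rightarrow> 'k::field) \<Rightarrow> ('v \<Rightarrow> 'k)" where
  "dact \<phi> f = (\<lambda>v. - f (\<phi> v))"

definition args :: "('k::field \<Rightarrow> 'v::ab_group_add \<Rightarrow> 'v) \<Rightarrow> nat \<Rightarrow> ('v \<Rightarrow> 'k) list set" where
  "args sV m = {fs. length fs = m \<and> set fs \<subseteq> alg_dual sV}"

text \<open>F is a multilinear map on (V^*)^m (with values in a module with scaling sX) which
  vanishes as soon as one argument lies in V_* = W; i.e. F is a multilinear map on
  (V^*/V_*)^m.\<close>
definition quot_multilinear ::
  "('k::field \<Rightarrow> 'v::ab_group_add \<Rightarrow> 'v) \<Rightarrow> ('v \<Rightarrow> 'k) set \<Rightarrow> ('k \<Rightarrow> 'x::ab_group_add \<Rightarrow> 'x)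
     \<Rightarrow> nat \<Rightarrow> (('v \<Rightarrow> 'k) list \<Rightarrow> 'x) \<Rightarrow> bool" where
  "quot_multilinear sV W sX m F \<longleftrightarrow>
     (\<forall>fs\<in>args sV m. \<forall>i<m. \<forall>g\<in>alg_dual sV. \<forall>h\<in>alg_dual sV. \<forall>c.
        F (fs[i := g + h]) = F (fs[i := g]) + F (fs[i := h]) \<and>
        F (fs[i := fscale c g]) = sX c (F (fs[i := g]))) \<and>
     (\<forall>fs\<in>args sV m. (\<exists>i<m. fs ! i \<in> W) \<longrightarrow> F fs = 0)"

text \<open>(T, iota) is the m-th tensor power of V^*/V_*, with iota (f_1,...,f_m) the tensor
  [f_1] (x) ... (x) [f_m]: T is a K-vector space, iota is multilinear on (V^*/V_*)^m, its
  image spans T, and every K-valued multilinear form on (V^*/V_*)^m factors uniquely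
  through a linear functional on T (universal property; together with spanning this
  characterises the tensor power up to unique isomorphism).\<close>
definition is_quot_tensor_power ::
  "('k::field \<Rightarrow> 'v::ab_group_add \<Rightarrow> 'v) \<Rightarrow> ('v \<Rightarrow> 'k) set \<Rightarrow> ('k \<Rightarrow> 't::ab_group_add \<Rightarrow> 't)
     \<Rightarrow> nat \<Rightarrow> (('v \<Rightarrow> 'k) list \<Rightarrow> 't) \<Rightarrow> bool" where
  "is_quot_tensor_power sV W sT m \<iota> \<longleftrightarrow>
     vector_space sT \<and>
     quot_multilinear sV W sT m \<iota> \<and>
     module.span sT (\<iota> ` args sV m) = UNIV \<and>
     (\<forall>g. quot_multilinear sV W (*) m g \<longrightarrow>
        (\<exists>l. Vector_Spaces.linear sT (*) l \<and> (\<forall>fs\<in>args sV m. g fs = l (\<iota> fs))))"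

definition tens_act ::
  "('k::field \<Rightarrow> 'v::ab_group_add \<Rightarrow> 'v) \<Rightarrow> ('k \<Rightarrow> 't::ab_group_add \<Rightarrow> 't)
     \<Rightarrow> nat \<Rightarrow> (('v \<Rightarrow> 'k) list \<Rightarrow> 't) \<Rightarrow> ('v \<Rightarrow> 'v) \<Rightarrow> ('t \<Rightarrow> 't) \<Rightarrow> bool" where
  "tens_act sV sT m \<iota> \<phi> A \<longleftrightarrow>
     Vector_Spaces.linear sT sT A \<and>
     (\<forall>fs\<in>args sV m. A (\<iota> fs) = (\<Sum>i<m. \<iota> (fs[i := dact \<phi> (fs ! i)])))"

definition gl_end ::
  "('k::field \<Rightarrow> 'v::ab_group_add \<Rightarrow> 'v) \<Rightarrow> ('v \<Rightarrow> 'k) set \<Rightarrow> ('k \<Rightarrow> 't::ab_group_add \<Rightarrow> 't)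
     \<Rightarrow> nat \<Rightarrow> (('v \<Rightarrow> 'k) list \<Rightarrow> 't) \<Rightarrow> ('t \<Rightarrow> 't) set" where
  "gl_end sV W sT m \<iota> =
     {E. Vector_Spaces.linear sT sT E \<and>
         (\<forall>\<phi>\<in>glM sV W. \<forall>A. tens_act sV sT m \<iota> \<phi> A \<longrightarrow> E \<circ> A = A \<circ> E)}"

definition Sym :: "nat \<Rightarrow> (nat \<Rightarrow> nat) set" where
  "Sym m = {\<sigma>. \<sigma> permutes {..<m}}"

text \<open>The operator by which sigma permutes the tensorands: the factor in position i is
  moved to position sigma i.\<close>
definition perm_op ::
  "('k::field \<Rightarrow> 'v::ab_group_add \<Rightarrow> 'v) \<Rightarrow> ('k \<Rightarrow> 't::ab_group_add \<Rightarrow> 't)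
     \<Rightarrow> nat \<Rightarrow> (('v \<Rightarrow> 'k) list \<Rightarrow> 't) \<Rightarrow> (nat \<Rightarrow> nat) \<Rightarrow> ('t \<Rightarrow> 't)" where
  "perm_op sV sT m \<iota> \<sigma> =
     (THE A. Vector_Spaces.linear sT sT A \<and>
        (\<forall>fs\<in>args sV m. A (\<iota> fs) = \<iota> (permute_list (inv \<sigma>) fs)))"

text \<open>The group algebra K[S_m]: functions S_m -> K (extended by 0), with convolution.\<close>
definition grp_alg :: "nat \<Rightarrow> ((nat \<Rightarrow> nat) \<Rightarrow> 'k::field) set" where
  "grp_alg m = {a. \<forall>\<sigma>. \<sigma> \<notin> Sym m \<longrightarrow> a \<sigma> = 0}"

definition ga_mult :: "nat \<Rightarrow> ((nat \<Rightarrow> nat) \<Rightarrow> 'k::field) \<Rightarrow> ((nat \<Rightarrow> nat) \<Rightarrow> 'k) \<Rightarrow> ((nat \<Rightarrow> nat) \<Rightarrow> 'k)" where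
  "ga_mult m a b = (\<lambda>\<rho>. if \<rho> \<in> Sym m then (\<Sum>\<sigma>\<in>Sym m. a \<sigma> * b (inv \<sigma> \<circ> \<rho>)) else 0)"

definition ga_one :: "(nat \<Rightarrow> nat) \<Rightarrow> 'k::field" where
  "ga_one = (\<lambda>\<sigma>. if \<sigma> = id then 1 else 0)"

definition perm_rep ::
  "('k::field \<Rightarrow> 'v::ab_group_add \<Rightarrow> 'v) \<Rightarrow> ('k \<Rightarrow> 't::ab_group_add \<Rightarrow> 't)
     \<Rightarrow> nat \<Rightarrow> (('v \<Rightarrow> 'k) list \<Rightarrow> 't) \<Rightarrow> ((nat \<Rightarrow> nat) \<Rightarrow> 'k) \<Rightarrow> ('t \<Rightarrow> 't)" where
  "perm_rep sV sT m \<iota> a = (\<lambda>t. \<Sum>\<sigma>\<in>Sym m. sT (a \<sigma>) (perm_op sV sT m \<iota> \<sigma> t))"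

end

theory Submission
  imports Defs
begin

lemma vs_fscale: "vector_space (fscale :: 'k::field \<Rightarrow> ('v \<Rightarrow> 'k) \<Rightarrow> _)"
  by unfold_locales (auto simp: fscale_def algebra_simps fun_eq_iff)

lemma vs_mult: "vector_space ((*) :: 'k::field \<Rightarrow> 'k \<Rightarrow> 'k)"
  by unfold_locales (auto simp: algebra_simps)

lemma sep_functional:
  fixes sX :: "'k::field \<Rightarrow> 'x::ab_group_add \<Rightarrow> 'x"
  assumes "vector_space sX" "x \<noteq> 0"
  shows "\<exists>l. Vector_Spaces.linear sX (*) l \<and> l x = 1"
proof -
  interpret X: vector_space sX by fact
  interpret P: vector_space_pair sX "(*) :: 'k \<Rightarrow> 'k \<Rightarrow> 'k"
    by unfold_locales (auto simp: algebra_simps)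
  have i: "X.independent {x}" using assms(2) by simp
  show ?thesis
    by (rule exI[of _ "P.construct {x} (\<lambda>_. 1)"])
       (simp add: P.linear_construct[OF i] P.construct_basis[OF i])
qed

locale ctx =
  fixes sV :: "'k::field_char_0 \<Rightarrow> 'v::ab_group_add \<Rightarrow> 'v"
    and W :: "('v \<Rightarrow> 'k) set"
    and sT :: "'k \<Rightarrow> 't::ab_group_add \<Rightarrow> 't"
    and \<iota> :: "('v \<Rightarrow> 'k) list \<Rightarrow> 't"
    and m :: nat
  assumes mp: "mackey_pair sV W"
    and tp: "is_quot_tensor_power sV W sT m \<iota>"
begin

lemma vsV: "vector_space sV" using mp by (simp add: mackey_pair_def)
lemma vsT: "vector_space sT" using tp by (simp add: is_quot_tensor_power_def)

sublocale V: vector_space sV by (rule vsV)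
sublocale T: vector_space sT by (rule vsT)
sublocale F: vector_space "fscale :: 'k \<Rightarrow> ('v \<Rightarrow> 'k) \<Rightarrow> _" by (rule vs_fscale)
sublocale K: vector_space "(*) :: 'k \<Rightarrow> 'k \<Rightarrow> 'k" by (rule vs_mult)

abbreviation "Vd \<equiv> alg_dual sV"
abbreviation "Args \<equiv> args sV m"

lemma ad_iff: "f \<in> Vd \<longleftrightarrow> (\<forall>x y. f (x + y) = f x + f y) \<and> (\<forall>c x. f (sV c x) = c * f x)"
  unfolding alg_dual_def linear_iff using vsV vs_mult by auto

lemma ad_add_apply: "f \<in> Vd \<Longrightarrow> f (x + y) = f x + f y" by (simp add: ad_iff)
lemma ad_scale_apply: "f \<in> Vd \<Longrightarrow> f (sV c x) = c * f x" by (simp add: ad_iff)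
lemma ad_zero_apply: "f \<in> Vd \<Longrightarrow> f 0 = 0"
  using ad_add_apply[of f 0 0] by simp
lemma ad_sum_apply: "f \<in> Vd \<Longrightarrow> f (\<Sum>i\<in>I. x i) = (\<Sum>i\<in>I. f (x i))"
  by (induct I rule: infinite_finite_induct) (simp_all add: ad_zero_apply ad_add_apply)

lemma ad_add: assumes "f \<in> Vd" "g \<in> Vd" shows "f + g \<in> Vd"
  unfolding ad_iff by (simp add: ad_add_apply[OF assms(1)] ad_add_apply[OF assms(2)]
     ad_scale_apply[OF assms(1)] ad_scale_apply[OF assms(2)] distrib_left)
lemma ad_scale: assumes "f \<in> Vd" shows "fscale c f \<in> Vd"
  unfolding ad_iff fscale_def by (simp add: ad_add_apply[OF assms(1)]
     ad_scale_apply[OF assms(1)] distrib_left)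
lemma ad_zero: "0 \<in> Vd"
  unfolding ad_iff by simp
lemma ad_neg: assumes "f \<in> Vd" shows "- f \<in> Vd"
  unfolding ad_iff by (simp add: ad_add_apply[OF assms(1)] ad_scale_apply[OF assms(1)])
lemma ad_diff: assumes "f \<in> Vd" "g \<in> Vd" shows "f - g \<in> Vd"
  unfolding ad_iff by (simp add: ad_add_apply[OF assms(1)] ad_add_apply[OF assms(2)]
     ad_scale_apply[OF assms(1)] ad_scale_apply[OF assms(2)] right_diff_distrib)
lemma ad_sum: "(\<And>i. i \<in> I \<Longrightarrow> f i \<in> Vd) \<Longrightarrow> (\<Sum>i\<in>I. f i) \<in> Vd"
  by (induct I rule: infinite_finite_induct) (auto intro: ad_add ad_zero)

lemma W_sub: "W \<subseteq> Vd" using mp by (simp add: mackey_pair_def)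
lemma W_subspace: "F.subspace W" using mp by (simp add: mackey_pair_def)
lemma W_zero: "0 \<in> W" using W_subspace F.subspace_0 by blast
lemma W_add: "f \<in> W \<Longrightarrow> g \<in> W \<Longrightarrow> f + g \<in> W" using W_subspace F.subspace_add by blast
lemma W_scale: "f \<in> W \<Longrightarrow> fscale c f \<in> W" using W_subspace F.subspace_scale by blast
lemma W_neg: "f \<in> W \<Longrightarrow> - f \<in> W" using W_subspace F.subspace_neg by blast
lemma W_diff: "f \<in> W \<Longrightarrow> g \<in> W \<Longrightarrow> f - g \<in> W" using W_subspace F.subspace_diff by blast
lemma W_sum: "(\<And>i. i \<in> I \<Longrightarrow> f i \<in> W) \<Longrightarrow> (\<Sum>i\<in>I. f i) \<in> W"
  using W_subspace F.subspace_sum by blast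

lemma args_iff: "fs \<in> Args \<longleftrightarrow> length fs = m \<and> (\<forall>i<m. fs ! i \<in> Vd)"
  by (auto simp: args_def in_set_conv_nth) (use nth_mem in blast)

lemma args_upd: "fs \<in> Args \<Longrightarrow> g \<in> Vd \<Longrightarrow> fs[i := g] \<in> Args"
proof -
  assume a: "fs \<in> Args" "g \<in> Vd"
  show ?thesis unfolding args_iff
  proof (intro conjI allI impI)
    fix j assume "j < m"
    then show "fs[i := g] ! j \<in> Vd" using a by (cases "i = j") (auto simp: args_iff)
  qed (use a in \<open>simp add: args_iff\<close>)
qed

lemma qml_iota: "quot_multilinear sV W sT m \<iota>"
  using tp by (simp add: is_quot_tensor_power_def)
lemma span_iota: "T.span (\<iota> ` Args) = UNIV"
  using tp by (simp add: is_quot_tensor_power_def)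
lemma univ_iota: "quot_multilinear sV W (*) m g \<Longrightarrow>
        (\<exists>l. Vector_Spaces.linear sT (*) l \<and> (\<forall>fs\<in>Args. g fs = l (\<iota> fs)))"
  using tp by (simp add: is_quot_tensor_power_def)

lemma iota_add: "fs \<in> Args \<Longrightarrow> i < m \<Longrightarrow> g \<in> Vd \<Longrightarrow> h \<in> Vd \<Longrightarrow>
   \<iota> (fs[i := g + h]) = \<iota> (fs[i := g]) + \<iota> (fs[i := h])"
  using qml_iota by (simp add: quot_multilinear_def)
lemma iota_scale: "fs \<in> Args \<Longrightarrow> i < m \<Longrightarrow> g \<in> Vd \<Longrightarrow>
   \<iota> (fs[i := fscale c g]) = sT c (\<iota> (fs[i := g]))"
  using qml_iota by (simp add: quot_multilinear_def)
lemma iota_W: "fs \<in> Args \<Longrightarrow> i < m \<Longrightarrow> fs ! i \<in> W \<Longrightarrow> \<iota> fs = 0"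
  using qml_iota by (auto simp: quot_multilinear_def)

lemma linT_eq:
  fixes sX :: "'k \<Rightarrow> 'x::ab_group_add \<Rightarrow> 'x"
  assumes "Vector_Spaces.linear sT sX A" "Vector_Spaces.linear sT sX B"
    and "\<And>fs. fs \<in> Args \<Longrightarrow> A (\<iota> fs) = B (\<iota> fs)"
  shows "A = B"
proof -
  interpret P: vector_space_pair sT sX
    using assms(1) by (auto simp: linear_iff intro: vector_space_pair.intro)
  show ?thesis
  proof
    fix t
    have "t \<in> T.span (\<iota> ` Args)" using span_iota by simp
    then show "A t = B t"
      by (rule P.linear_eq_on[OF assms(1,2)]) (use assms(3) in auto)
  qed
qed

lemma qml_compose:
  fixes sX :: "'k \<Rightarrow> 'x::ab_group_add \<Rightarrow> 'x"
  assumes "quot_multilinear sV W sX m G" "Vector_Spaces.linear sX sY l"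
  shows "quot_multilinear sV W sY m (l \<circ> G)"
proof -
  interpret L: linear sX sY l by fact
  show ?thesis unfolding quot_multilinear_def comp_def
  proof (intro conjI ballI allI impI)
    fix fs i g h c assume a: "fs \<in> Args" "i < m" "g \<in> Vd" "h \<in> Vd"
    have e1: "G (fs[i := g + h]) = G (fs[i := g]) + G (fs[i := h])"
      and e2: "G (fs[i := fscale c g]) = sX c (G (fs[i := g]))"
      using assms(1) a unfolding quot_multilinear_def by blast+
    show "l (G (fs[i := g + h])) = l (G (fs[i := g])) + l (G (fs[i := h]))"
      "l (G (fs[i := fscale c g])) = sY c (l (G (fs[i := g])))"
      by (simp_all only: e1 e2 L.add L.scale)
  next
    fix fs assume "fs \<in> Args" "\<exists>i<m. fs ! i \<in> W"
    then have "G fs = 0" using assms(1) unfolding quot_multilinear_def by blast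
    then show "l (G fs) = 0" by (simp add: L.zero)
  qed
qed

lemma univ_gen:
  fixes sX :: "'k \<Rightarrow> 'x::ab_group_add \<Rightarrow> 'x"
  assumes X: "vector_space sX" and G: "quot_multilinear sV W sX m G"
  shows "\<exists>A. Vector_Spaces.linear sT sX A \<and> (\<forall>fs\<in>Args. A (\<iota> fs) = G fs)"
proof -
  interpret X: vector_space sX by fact
  interpret P: vector_space_pair sT sX by unfold_locales
  obtain B where B: "B \<subseteq> \<iota> ` Args" "T.independent B" "\<iota> ` Args \<subseteq> T.span B"
    using T.maximal_independent_subset by blast
  have spB: "T.span B = UNIV"
    using span_iota B(3) T.span_mono T.span_span by (metis top.extremum_uniqueI)
  define pre where "pre b = (SOME fs. fs \<in> Args \<and> \<iota> fs = b)" for b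
  have pre: "pre b \<in> Args \<and> \<iota> (pre b) = b" if "b \<in> B" for b
    unfolding pre_def by (rule someI_ex) (use that B(1) in auto)
  define A where "A = P.construct B (\<lambda>b. G (pre b))"
  have linA: "Vector_Spaces.linear sT sX A" unfolding A_def by (rule P.linear_construct[OF B(2)])
  have "A (\<iota> fs) = G fs" if fs: "fs \<in> Args" for fs
  proof (rule ccontr)
    assume ne: "A (\<iota> fs) \<noteq> G fs"
    obtain lam where lam: "Vector_Spaces.linear sX (*) lam" "lam (A (\<iota> fs) - G fs) = 1"
      using sep_functional[OF X] ne by (metis right_minus_eq)
    interpret lam: linear sX "(*)" lam by fact
    have "quot_multilinear sV W (*) m (lam \<circ> G)" by (rule qml_compose[OF G lam(1)])
    then obtain l where l: "Vector_Spaces.linear sT (*) l" "\<forall>fs\<in>Args. (lam \<circ> G) fs = l (\<iota> fs)"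
      using univ_iota by blast
    have "lam \<circ> A = l"
    proof -
      interpret P2: vector_space_pair sT "(*) :: 'k \<Rightarrow> 'k \<Rightarrow> 'k" by unfold_locales
      have lin1: "Vector_Spaces.linear sT (*) (lam \<circ> A)"
        by (rule Vector_Spaces.linear_compose[OF linA lam(1)])
      show ?thesis
      proof
        fix t
        have "t \<in> T.span B" using spB by simp
        then show "(lam \<circ> A) t = l t"
        proof (rule P2.linear_eq_on[OF lin1 l(1)])
          fix b assume b: "b \<in> B"
          have "(lam \<circ> A) b = lam (G (pre b))"
            by (simp add: A_def P.construct_basis[OF B(2) b])
          also have "\<dots> = l (\<iota> (pre b))" using l(2) pre[OF b] by auto
          also have "\<dots> = l b" using pre[OF b] by simp
          finally show "(lam \<circ> A) b = l b" .
        qed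
      qed
    qed
    then have "lam (A (\<iota> fs)) = l (\<iota> fs)" by (metis comp_apply)
    also have "\<dots> = lam (G fs)" using l(2) fs by auto
    finally have e: "lam (A (\<iota> fs)) = lam (G fs)" .
    have "lam (A (\<iota> fs) - G fs) = lam (A (\<iota> fs)) - lam (G fs)" by (rule lam.diff)
    also have "\<dots> = 0" using e by (simp only: right_minus_eq)
    finally have "lam (A (\<iota> fs) - G fs) = 0" .
    with lam(2) show False by (metis zero_neq_one)
  qed
  with linA show ?thesis by blast
qed

lemma univ_unique:
  assumes G: "quot_multilinear sV W sT m G"
  shows "\<exists>!A. Vector_Spaces.linear sT sT A \<and> (\<forall>fs\<in>Args. A (\<iota> fs) = G fs)"
proof -
  obtain A where A: "Vector_Spaces.linear sT sT A" "\<forall>fs\<in>Args. A (\<iota> fs) = G fs"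
    using univ_gen[OF vsT G] by blast
  show ?thesis
  proof (rule ex1I[of _ A])
    fix B assume B: "Vector_Spaces.linear sT sT B \<and> (\<forall>fs\<in>Args. B (\<iota> fs) = G fs)"
    show "B = A" by (rule linT_eq) (use A B in auto)
  next
    show "Vector_Spaces.linear sT sT A \<and> (\<forall>fs\<in>Args. A (\<iota> fs) = G fs)" using A by blast
  qed
qed

end

context ctx begin

abbreviation "P \<equiv> perm_op sV sT m \<iota>"
abbreviation "PR \<equiv> perm_rep sV sT m \<iota>"

lemma Sym_iff: "\<sigma> \<in> Sym m \<longleftrightarrow> \<sigma> permutes {..<m}" by (simp add: Sym_def)

lemma finite_Sym: "finite (Sym m)"
  unfolding Sym_def by (rule finite_permutations) simp

lemma id_Sym: "id \<in> Sym m" by (simp add: Sym_def permutes_id)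

lemma Sym_comp: "\<sigma> \<in> Sym m \<Longrightarrow> \<tau> \<in> Sym m \<Longrightarrow> \<sigma> \<circ> \<tau> \<in> Sym m"
  unfolding Sym_def by (simp add: permutes_compose)

lemma Sym_inv: "\<sigma> \<in> Sym m \<Longrightarrow> inv \<sigma> \<in> Sym m"
  unfolding Sym_def by (simp add: permutes_inv)

lemma perm_args:
  assumes "\<sigma> \<in> Sym m" "fs \<in> Args"
  shows "permute_list (inv \<sigma>) fs \<in> Args"
proof -
  have s: "inv \<sigma> permutes {..<m}" using assms(1) Sym_inv Sym_iff by blast
  have l: "length fs = m" using assms(2) args_iff by blast
  show ?thesis unfolding args_iff
  proof (intro conjI allI impI)
    fix i assume i: "i < m"
    have "permute_list (inv \<sigma>) fs ! i = fs ! inv \<sigma> i"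
      by (rule permute_list_nth) (use s l i in auto)
    moreover have "inv \<sigma> i < m" using permutes_in_image[OF s] i by auto
    ultimately show "permute_list (inv \<sigma>) fs ! i \<in> Vd" using assms(2) args_iff by auto
  qed (use l in simp)
qed

lemma perm_nth:
  assumes "\<sigma> \<in> Sym m" "length fs = m" "i < m"
  shows "permute_list (inv \<sigma>) fs ! i = fs ! inv \<sigma> i"
proof -
  have s: "inv \<sigma> permutes {..<m}" using assms(1) Sym_inv Sym_iff by blast
  show ?thesis by (rule permute_list_nth) (use s assms in auto)
qed

lemma perm_upd:
  assumes "\<sigma> \<in> Sym m" "length fs = m" "i < m"
  shows "permute_list (inv \<sigma>) (fs[i := g]) = (permute_list (inv \<sigma>) fs)[\<sigma> i := g]"
proof (rule nth_equalityI)
  have s: "\<sigma> permutes {..<m}" using assms(1) Sym_iff by blast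
  show "length (permute_list (inv \<sigma>) (fs[i := g])) = length ((permute_list (inv \<sigma>) fs)[\<sigma> i := g])"
    by simp
  fix j assume j: "j < length (permute_list (inv \<sigma>) (fs[i := g]))"
  then have j': "j < m" using assms by simp
  have "inv \<sigma> j < m" using permutes_in_image[OF permutes_inv[OF s]] j' by auto
  have si: "\<sigma> i < m" using permutes_in_image[OF s] assms(3) by auto
  have eq: "inv \<sigma> j = i \<longleftrightarrow> j = \<sigma> i" using permutes_inv_eq[OF s] by auto
  show "permute_list (inv \<sigma>) (fs[i := g]) ! j = (permute_list (inv \<sigma>) fs)[\<sigma> i := g] ! j"
    using assms j' si eq \<open>inv \<sigma> j < m\<close>
    by (auto simp: perm_nth nth_list_update)
qed

lemma qml_perm:
  assumes "\<sigma> \<in> Sym m"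
  shows "quot_multilinear sV W sT m (\<lambda>fs. \<iota> (permute_list (inv \<sigma>) fs))"
proof -
  have s: "\<sigma> permutes {..<m}" using assms(1) Sym_iff by blast
  show ?thesis unfolding quot_multilinear_def
  proof (intro conjI ballI allI impI)
    fix fs i g h c assume a: "fs \<in> Args" "i < m" "g \<in> Vd" "h \<in> Vd"
    have l: "length fs = m" using a(1) args_iff by blast
    have si: "\<sigma> i < m" using permutes_in_image[OF s] a(2) by auto
    have pa: "permute_list (inv \<sigma>) fs \<in> Args" by (rule perm_args[OF assms a(1)])
    show "\<iota> (permute_list (inv \<sigma>) (fs[i := g + h])) =
          \<iota> (permute_list (inv \<sigma>) (fs[i := g])) + \<iota> (permute_list (inv \<sigma>) (fs[i := h]))"
      using iota_add[OF pa si a(3,4)] by (simp only: perm_upd[OF assms l a(2)])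
    show "\<iota> (permute_list (inv \<sigma>) (fs[i := fscale c g])) = sT c (\<iota> (permute_list (inv \<sigma>) (fs[i := g])))"
      using iota_scale[OF pa si a(3)] by (simp only: perm_upd[OF assms l a(2)])
  next
    fix fs assume a: "fs \<in> Args" "\<exists>i<m. fs ! i \<in> W"
    then obtain i where i: "i < m" "fs ! i \<in> W" by blast
    have l: "length fs = m" using a(1) args_iff by blast
    have si: "\<sigma> i < m" using permutes_in_image[OF s] i(1) by auto
    have "permute_list (inv \<sigma>) fs ! \<sigma> i = fs ! i"
      using perm_nth[OF assms l si] permutes_inverses(2)[OF s] by simp
    then show "\<iota> (permute_list (inv \<sigma>) fs) = 0"
      using iota_W[OF perm_args[OF assms a(1)] si] i by simp
  qed
qed

lemma P_char:
  assumes "\<sigma> \<in> Sym m"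
  shows "Vector_Spaces.linear sT sT (P \<sigma>) \<and> (\<forall>fs\<in>Args. P \<sigma> (\<iota> fs) = \<iota> (permute_list (inv \<sigma>) fs))"
  unfolding perm_op_def by (rule theI'[OF univ_unique[OF qml_perm[OF assms]]])

lemma P_lin: "\<sigma> \<in> Sym m \<Longrightarrow> Vector_Spaces.linear sT sT (P \<sigma>)"
  using P_char by blast
lemma P_gen: "\<sigma> \<in> Sym m \<Longrightarrow> fs \<in> Args \<Longrightarrow> P \<sigma> (\<iota> fs) = \<iota> (permute_list (inv \<sigma>) fs)"
  using P_char by blast

lemma linTT_comp: "Vector_Spaces.linear sT sT A \<Longrightarrow> Vector_Spaces.linear sT sT B \<Longrightarrow>
   Vector_Spaces.linear sT sT (A \<circ> B)"
  by (rule Vector_Spaces.linear_compose)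

lemma P_comp:
  assumes "\<sigma> \<in> Sym m" "\<tau> \<in> Sym m"
  shows "P \<sigma> \<circ> P \<tau> = P (\<sigma> \<circ> \<tau>)"
proof (rule linT_eq)
  show "Vector_Spaces.linear sT sT (P \<sigma> \<circ> P \<tau>)" using P_lin assms linTT_comp by blast
  show "Vector_Spaces.linear sT sT (P (\<sigma> \<circ> \<tau>))" using P_lin assms Sym_comp by blast
  fix fs assume fs: "fs \<in> Args"
  have s: "\<sigma> permutes {..<m}" "\<tau> permutes {..<m}" using assms Sym_iff by blast+
  have l: "length fs = m" using fs args_iff by blast
  have "(P \<sigma> \<circ> P \<tau>) (\<iota> fs) = \<iota> (permute_list (inv \<sigma>) (permute_list (inv \<tau>) fs))"
    using P_gen[OF assms(2) fs] P_gen[OF assms(1) perm_args[OF assms(2) fs]] by simp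
  also have "permute_list (inv \<sigma>) (permute_list (inv \<tau>) fs) = permute_list (inv \<tau> \<circ> inv \<sigma>) fs"
    by (rule permute_list_compose[symmetric]) (use permutes_inv[OF s(1)] l in simp)
  also have "inv \<tau> \<circ> inv \<sigma> = inv (\<sigma> \<circ> \<tau>)"
    by (rule o_inv_distrib[symmetric]) (use s permutes_bij in auto)
  finally show "(P \<sigma> \<circ> P \<tau>) (\<iota> fs) = P (\<sigma> \<circ> \<tau>) (\<iota> fs)"
    using P_gen[OF Sym_comp[OF assms] fs] by simp
qed

lemma P_id: "P id = id"
proof (rule linT_eq)
  show "Vector_Spaces.linear sT sT (P id)" using P_lin id_Sym by blast
  show "Vector_Spaces.linear sT sT id" by (rule T.linear_id)
  fix fs assume "fs \<in> Args"
  then show "P id (\<iota> fs) = id (\<iota> fs)" using P_gen[OF id_Sym] by (simp add: inv_id)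
qed

lemma PR_apply: "PR a t = (\<Sum>\<sigma>\<in>Sym m. sT (a \<sigma>) (P \<sigma> t))"
  by (simp add: perm_rep_def)

lemma PR_lin: "Vector_Spaces.linear sT sT (PR a)"
proof -
  interpret TT: vector_space_pair sT sT by unfold_locales
  show ?thesis unfolding perm_rep_def
    by (rule TT.linear_compose_sum) (auto intro: TT.linear_compose_scale_right P_lin)
qed

lemma clause3: "PR (\<lambda>\<sigma>. a \<sigma> + c * b \<sigma>) = (\<lambda>t. PR a t + sT c (PR b t))"
  by (rule ext) (simp add: PR_apply T.scale_left_distrib sum.distrib T.scale_sum_right)

lemma clause4: "PR ga_one = id"
proof
  fix t
  have "PR ga_one t = (\<Sum>\<sigma>\<in>Sym m. if \<sigma> = id then P \<sigma> t else 0)"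
    unfolding PR_apply ga_one_def by (rule sum.cong) auto
  also have "\<dots> = P id t" using id_Sym finite_Sym by (simp add: sum.delta)
  finally show "PR ga_one t = id t" by (simp add: P_id)
qed

lemma clause2:
  assumes "a \<in> grp_alg m" "b \<in> grp_alg m"
  shows "PR (ga_mult m a b) = PR a \<circ> PR b"
proof
  fix t
  have "PR (ga_mult m a b) t = (\<Sum>\<rho>\<in>Sym m. \<Sum>\<sigma>\<in>Sym m. sT (a \<sigma> * b (inv \<sigma> \<circ> \<rho>)) (P \<rho> t))"
    unfolding PR_apply ga_mult_def by (rule sum.cong) (auto simp: T.scale_sum_left)
  also have "\<dots> = (\<Sum>\<sigma>\<in>Sym m. \<Sum>\<rho>\<in>Sym m. sT (a \<sigma> * b (inv \<sigma> \<circ> \<rho>)) (P \<rho> t))"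
    by (rule sum.swap)
  also have "\<dots> = (\<Sum>\<sigma>\<in>Sym m. \<Sum>\<tau>\<in>Sym m. sT (a \<sigma> * b \<tau>) (P (\<sigma> \<circ> \<tau>) t))"
  proof (rule sum.cong[OF refl])
    fix \<sigma> assume s: "\<sigma> \<in> Sym m"
    have sp: "\<sigma> permutes {..<m}" using s Sym_iff by blast
    have bij: "bij_betw (\<lambda>\<tau>. \<sigma> \<circ> \<tau>) (Sym m) (Sym m)"
    proof (rule bij_betwI[where g="\<lambda>\<rho>. inv \<sigma> \<circ> \<rho>"])
      show "(\<circ>) \<sigma> \<in> Sym m \<rightarrow> Sym m" using Sym_comp s by blast
      show "(\<circ>) (inv \<sigma>) \<in> Sym m \<rightarrow> Sym m" using Sym_comp Sym_inv s by blast
      show "inv \<sigma> \<circ> (\<sigma> \<circ> x) = x" for x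
        by (simp add: comp_assoc[symmetric] permutes_inv_o(2)[OF sp])
      show "\<sigma> \<circ> (inv \<sigma> \<circ> y) = y" for y
        by (simp add: comp_assoc[symmetric] permutes_inv_o(1)[OF sp])
    qed
    have "(\<Sum>\<tau>\<in>Sym m. sT (a \<sigma> * b \<tau>) (P (\<sigma> \<circ> \<tau>) t)) =
          (\<Sum>\<tau>\<in>Sym m. sT (a \<sigma> * b (inv \<sigma> \<circ> (\<sigma> \<circ> \<tau>))) (P (\<sigma> \<circ> \<tau>) t))"
      by (simp add: comp_assoc[symmetric] permutes_inv_o(2)[OF sp])
    also have "\<dots> = (\<Sum>\<rho>\<in>Sym m. sT (a \<sigma> * b (inv \<sigma> \<circ> \<rho>)) (P \<rho> t))"
      by (rule sum.reindex_bij_betw[OF bij])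
    finally show "(\<Sum>\<rho>\<in>Sym m. sT (a \<sigma> * b (inv \<sigma> \<circ> \<rho>)) (P \<rho> t)) =
       (\<Sum>\<tau>\<in>Sym m. sT (a \<sigma> * b \<tau>) (P (\<sigma> \<circ> \<tau>) t))" by simp
  qed
  also have "\<dots> = PR a (PR b t)"
  proof -
    have "PR a (PR b t) = (\<Sum>\<sigma>\<in>Sym m. sT (a \<sigma>) (P \<sigma> (\<Sum>\<tau>\<in>Sym m. sT (b \<tau>) (P \<tau> t))))"
      by (simp add: PR_apply)
    also have "\<dots> = (\<Sum>\<sigma>\<in>Sym m. \<Sum>\<tau>\<in>Sym m. sT (a \<sigma> * b \<tau>) (P (\<sigma> \<circ> \<tau>) t))"
    proof (rule sum.cong[OF refl])
      fix \<sigma> assume s: "\<sigma> \<in> Sym m"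
      interpret Ps: linear sT sT "P \<sigma>" using P_lin[OF s] .
      show "sT (a \<sigma>) (P \<sigma> (\<Sum>\<tau>\<in>Sym m. sT (b \<tau>) (P \<tau> t))) =
            (\<Sum>\<tau>\<in>Sym m. sT (a \<sigma> * b \<tau>) (P (\<sigma> \<circ> \<tau>) t))"
        unfolding Ps.sum Ps.scale T.scale_sum_right
      proof (rule sum.cong[OF refl])
        fix \<tau> assume "\<tau> \<in> Sym m"
        then show "sT (a \<sigma>) (sT (b \<tau>) (P \<sigma> (P \<tau> t))) = sT (a \<sigma> * b \<tau>) (P (\<sigma> \<circ> \<tau>) t)"
          using P_comp[OF s] by (metis T.scale_scale comp_apply)
      qed
    qed
    finally show ?thesis by simp
  qed
  finally show "PR (ga_mult m a b) t = (PR a \<circ> PR b) t" by simp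
qed

end

lemma (in vector_space) lin_self: "Vector_Spaces.linear scale scale f \<longleftrightarrow>
   (\<forall>x y. f (x + y) = f x + f y) \<and> (\<forall>c x. f (scale c x) = scale c (f x))"
  unfolding linear_iff using vector_space_axioms by auto

context ctx begin

interpretation TT: vector_space_pair sT sT by unfold_locales

definition sm :: "(('v \<Rightarrow> 'k) \<Rightarrow> ('v \<Rightarrow> 'k)) \<Rightarrow> bool" where
  "sm l \<longleftrightarrow> (\<forall>f\<in>Vd. l f \<in> Vd) \<and> (\<forall>f\<in>Vd. \<forall>g\<in>Vd. l (f + g) = l f + l g)
     \<and> (\<forall>c. \<forall>f\<in>Vd. l (fscale c f) = fscale c (l f)) \<and> (\<forall>w\<in>W. l w \<in> W)"

lemma smI:
  assumes "\<And>f. f \<in> Vd \<Longrightarrow> l f \<in> Vd" "\<And>f g. f \<in> Vd \<Longrightarrow> g \<in> Vd \<Longrightarrow> l (f + g) = l f + l g"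
    "\<And>c f. f \<in> Vd \<Longrightarrow> l (fscale c f) = fscale c (l f)" "\<And>w. w \<in> W \<Longrightarrow> l w \<in> W"
  shows "sm l"
  using assms unfolding sm_def by blast

lemma sm_Vd: "sm l \<Longrightarrow> f \<in> Vd \<Longrightarrow> l f \<in> Vd" unfolding sm_def by blast
lemma sm_add: "sm l \<Longrightarrow> f \<in> Vd \<Longrightarrow> g \<in> Vd \<Longrightarrow> l (f + g) = l f + l g" unfolding sm_def by blast
lemma sm_scale: "sm l \<Longrightarrow> f \<in> Vd \<Longrightarrow> l (fscale c f) = fscale c (l f)" unfolding sm_def by blast
lemma sm_W: "sm l \<Longrightarrow> w \<in> W \<Longrightarrow> l w \<in> W" unfolding sm_def by blast

lemma sm_id: "sm id" by (rule smI) (auto)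
lemma sm_comp: assumes "sm l" "sm l'" shows "sm (l \<circ> l')"
proof (rule smI)
  fix f g assume "f \<in> Vd" "g \<in> Vd"
  then show "(l \<circ> l') (f + g) = (l \<circ> l') f + (l \<circ> l') g"
    using assms by (metis comp_apply sm_Vd sm_add)
qed (use assms in \<open>auto simp: sm_Vd sm_scale sm_W\<close>)

definition appL :: "(nat \<Rightarrow> ('v \<Rightarrow> 'k) \<Rightarrow> ('v \<Rightarrow> 'k)) \<Rightarrow> ('v \<Rightarrow> 'k) list \<Rightarrow> ('v \<Rightarrow> 'k) list" where
  "appL L fs = map (\<lambda>i. L i (fs ! i)) [0..<m]"

definition good :: "(nat \<Rightarrow> ('v \<Rightarrow> 'k) \<Rightarrow> ('v \<Rightarrow> 'k)) \<Rightarrow> bool" where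
  "good L \<longleftrightarrow> (\<forall>i<m. sm (L i))"

lemma appL_len[simp]: "length (appL L fs) = m" by (simp add: appL_def)
lemma appL_nth: "i < m \<Longrightarrow> appL L fs ! i = L i (fs ! i)" by (simp add: appL_def)

lemma appL_args: "good L \<Longrightarrow> fs \<in> Args \<Longrightarrow> appL L fs \<in> Args"
  by (auto simp: args_iff appL_nth good_def sm_Vd)

lemma appL_upd: "i < m \<Longrightarrow> length fs = m \<Longrightarrow> appL L (fs[i := g]) = (appL L fs)[i := L i g]"
  by (rule nth_equalityI) (auto simp: appL_nth nth_list_update)

lemma appL_upd2: "i < m \<Longrightarrow> appL (L(i := l)) fs = (appL L fs)[i := l (fs ! i)]"
  by (rule nth_equalityI) (auto simp: appL_nth nth_list_update)

lemma appL_comp: "appL L (appL L' fs) = appL (\<lambda>i. L i \<circ> L' i) fs"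
  by (rule nth_equalityI) (auto simp: appL_nth)

lemma appL_id: "length fs = m \<Longrightarrow> appL (\<lambda>_. id) fs = fs"
  by (rule nth_equalityI) (auto simp: appL_nth)

lemma good_upd: "good L \<Longrightarrow> sm l \<Longrightarrow> good (L(i := l))"
  by (auto simp: good_def)

lemma good_comp: "good L \<Longrightarrow> good L' \<Longrightarrow> good (\<lambda>i. L i \<circ> L' i)"
  by (auto simp: good_def sm_comp)

lemma good_id: "good (\<lambda>_. id)" by (simp add: good_def sm_id)

lemma qml_appL:
  assumes "good L"
  shows "quot_multilinear sV W sT m (\<lambda>fs. \<iota> (appL L fs))"
  unfolding quot_multilinear_def
proof (intro conjI ballI allI impI)
  fix fs i g h c assume a: "fs \<in> Args" "i < m" "g \<in> Vd" "h \<in> Vd"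
  have l: "length fs = m" using a(1) args_iff by blast
  have s: "sm (L i)" using assms a(2) good_def by blast
  have pa: "appL L fs \<in> Args" by (rule appL_args[OF assms a(1)])
  show "\<iota> (appL L (fs[i := g + h])) = \<iota> (appL L (fs[i := g])) + \<iota> (appL L (fs[i := h]))"
    using iota_add[OF pa a(2) sm_Vd[OF s a(3)] sm_Vd[OF s a(4)]]
    by (simp only: appL_upd[OF a(2) l] sm_add[OF s a(3,4)])
  show "\<iota> (appL L (fs[i := fscale c g])) = sT c (\<iota> (appL L (fs[i := g])))"
    using iota_scale[OF pa a(2) sm_Vd[OF s a(3)]]
    by (simp only: appL_upd[OF a(2) l] sm_scale[OF s a(3)])
next
  fix fs assume a: "fs \<in> Args" "\<exists>i<m. fs ! i \<in> W"
  then obtain i where i: "i < m" "fs ! i \<in> W" by blast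
  have s: "sm (L i)" using assms i(1) good_def by blast
  show "\<iota> (appL L fs) = 0"
    by (rule iota_W[OF appL_args[OF assms a(1)] i(1)]) (simp add: appL_nth i sm_W[OF s])
qed

definition MS :: "(nat \<Rightarrow> ('v \<Rightarrow> 'k) \<Rightarrow> ('v \<Rightarrow> 'k)) \<Rightarrow> 't \<Rightarrow> 't" where
  "MS L = (THE A. Vector_Spaces.linear sT sT A \<and> (\<forall>fs\<in>Args. A (\<iota> fs) = \<iota> (appL L fs)))"

lemma MS_char:
  assumes "good L"
  shows "Vector_Spaces.linear sT sT (MS L) \<and> (\<forall>fs\<in>Args. MS L (\<iota> fs) = \<iota> (appL L fs))"
  unfolding MS_def by (rule theI'[OF univ_unique[OF qml_appL[OF assms]]])

lemma MS_lin: "good L \<Longrightarrow> Vector_Spaces.linear sT sT (MS L)" using MS_char by blast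
lemma MS_gen: "good L \<Longrightarrow> fs \<in> Args \<Longrightarrow> MS L (\<iota> fs) = \<iota> (appL L fs)" using MS_char by blast

lemma MS_comp:
  assumes "good L" "good L'"
  shows "MS L \<circ> MS L' = MS (\<lambda>i. L i \<circ> L' i)"
proof (rule linT_eq)
  show "Vector_Spaces.linear sT sT (MS L \<circ> MS L')" using MS_lin assms linTT_comp by blast
  show "Vector_Spaces.linear sT sT (MS (\<lambda>i. L i \<circ> L' i))" using MS_lin good_comp assms by blast
  fix fs assume fs: "fs \<in> Args"
  show "(MS L \<circ> MS L') (\<iota> fs) = MS (\<lambda>i. L i \<circ> L' i) (\<iota> fs)"
    using MS_gen[OF assms(2) fs] MS_gen[OF assms(1) appL_args[OF assms(2) fs]]
      MS_gen[OF good_comp[OF assms] fs] by (simp add: appL_comp)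
qed

lemma MS_comp_apply:
  assumes "good L" "good L'"
  shows "MS L (MS L' t) = MS (\<lambda>i. L i \<circ> L' i) t"
  using MS_comp[OF assms] by (metis comp_apply)

lemma MS_id: "MS (\<lambda>_. id) = id"
proof (rule linT_eq)
  show "Vector_Spaces.linear sT sT (MS (\<lambda>_. id))" using MS_lin good_id by blast
  show "Vector_Spaces.linear sT sT id" by (rule T.linear_id)
  fix fs assume fs: "fs \<in> Args"
  then show "MS (\<lambda>_. id) (\<iota> fs) = id (\<iota> fs)"
    using MS_gen[OF good_id fs] args_iff appL_id by auto
qed

lemma MS_slot_sum:
  assumes L: "good L" and i: "i < m" and fin: "finite K" and s: "\<And>k. k \<in> K \<Longrightarrow> sm (l k)"
    and ls: "sm (\<lambda>f. \<Sum>k\<in>K. l k f)"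
  shows "MS (L(i := (\<lambda>f. \<Sum>k\<in>K. l k f))) = (\<lambda>t. \<Sum>k\<in>K. MS (L(i := l k)) t)"
proof (rule linT_eq)
  show "Vector_Spaces.linear sT sT (MS (L(i := (\<lambda>f. \<Sum>k\<in>K. l k f))))"
    using MS_lin good_upd[OF L ls] by blast
  show "Vector_Spaces.linear sT sT (\<lambda>t. \<Sum>k\<in>K. MS (L(i := l k)) t)"
    by (rule TT.linear_compose_sum) (use MS_lin good_upd[OF L] s in blast)
  fix fs assume fs: "fs \<in> Args"
  have pa: "appL L fs \<in> Args" by (rule appL_args[OF L fs])
  have fi: "fs ! i \<in> Vd" using fs i args_iff by blast
  have "\<iota> ((appL L fs)[i := (\<Sum>k\<in>K. l k (fs ! i))]) = (\<Sum>k\<in>K. \<iota> ((appL L fs)[i := l k (fs ! i)]))"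
    using fin s
  proof (induct K rule: finite_induct)
    case empty
    have "\<iota> ((appL L fs)[i := 0]) = 0" by (rule iota_W) (use pa i W_zero in \<open>auto simp: args_upd ad_zero\<close>)
    then show ?case by (simp add: zero_fun_def)
  next
    case (insert k K)
    have sk: "sm (l k)" using insert by blast
    have "\<iota> ((appL L fs)[i := (\<Sum>k\<in>insert k K. l k (fs ! i))])
        = \<iota> ((appL L fs)[i := l k (fs ! i) + (\<Sum>k\<in>K. l k (fs ! i))])"
      by (simp only: sum.insert[OF insert(1) insert(2)])
    also have "\<dots> = \<iota> ((appL L fs)[i := l k (fs ! i)]) + \<iota> ((appL L fs)[i := (\<Sum>k\<in>K. l k (fs ! i))])"
      by (rule iota_add[OF pa i]) (use insert sm_Vd fi in \<open>auto intro: ad_sum\<close>)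
    also have "\<dots> = (\<Sum>k\<in>insert k K. \<iota> ((appL L fs)[i := l k (fs ! i)]))"
      by (simp only: sum.insert[OF insert(1) insert(2)] insert(3)[OF insert(4)[OF insertI2]])
    finally show ?case .
  qed
  then show "MS (L(i := (\<lambda>f. \<Sum>k\<in>K. l k f))) (\<iota> fs) = (\<Sum>k\<in>K. MS (L(i := l k)) (\<iota> fs))"
    using MS_gen[OF good_upd[OF L ls] fs] MS_gen[OF good_upd[OF L s] fs] i
    by (simp add: appL_upd2)
qed

lemma MS_slot_scale:
  assumes L: "good L" and i: "i < m" and s: "sm l" and ls: "sm (\<lambda>f. fscale c (l f))"
  shows "MS (L(i := (\<lambda>f. fscale c (l f)))) t = sT c (MS (L(i := l)) t)"
proof -
  have "MS (L(i := (\<lambda>f. fscale c (l f)))) = (\<lambda>t. sT c (MS (L(i := l)) t))"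
  proof (rule linT_eq)
    show "Vector_Spaces.linear sT sT (MS (L(i := (\<lambda>f. fscale c (l f)))))"
      using MS_lin good_upd[OF L ls] by blast
    show "Vector_Spaces.linear sT sT (\<lambda>t. sT c (MS (L(i := l)) t))"
      by (rule TT.linear_compose_scale_right) (use MS_lin good_upd[OF L s] in blast)
    fix fs assume fs: "fs \<in> Args"
    have pa: "appL L fs \<in> Args" by (rule appL_args[OF L fs])
    have fi: "fs ! i \<in> Vd" using fs i args_iff by blast
    show "MS (L(i := (\<lambda>f. fscale c (l f)))) (\<iota> fs) = sT c (MS (L(i := l)) (\<iota> fs))"
      using MS_gen[OF good_upd[OF L ls] fs] MS_gen[OF good_upd[OF L s] fs] i
        iota_scale[OF pa i sm_Vd[OF s fi]]
      by (simp add: appL_upd2)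
  qed
  then show ?thesis by simp
qed

lemma MS_slot_W:
  assumes L: "good L" and i: "i < m" and s: "sm l" and w: "\<And>f. f \<in> Vd \<Longrightarrow> l f \<in> W"
  shows "MS (L(i := l)) = (\<lambda>_. 0)"
proof (rule linT_eq)
  show "Vector_Spaces.linear sT sT (MS (L(i := l)))" using MS_lin good_upd[OF L s] by blast
  show "Vector_Spaces.linear sT sT (\<lambda>_. 0)" by (rule TT.linear_zero)
  fix fs assume fs: "fs \<in> Args"
  have fi: "fs ! i \<in> Vd" using fs i args_iff by blast
  show "MS (L(i := l)) (\<iota> fs) = 0"
    using MS_gen[OF good_upd[OF L s] fs] iota_W[OF appL_args[OF good_upd[OF L s] fs] i]
      w[OF fi] i by (simp add: appL_nth)
qed

end

context ctx begin

interpretation TT: vector_space_pair sT sT by unfold_locales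

lemma glM_lin: "\<phi> \<in> glM sV W \<Longrightarrow> Vector_Spaces.linear sV sV \<phi>"
  by (simp add: glM_def)
lemma glM_W: "\<phi> \<in> glM sV W \<Longrightarrow> f \<in> W \<Longrightarrow> f \<circ> \<phi> \<in> W"
  by (simp add: glM_def)

lemma comp_ad:
  assumes "Vector_Spaces.linear sV sV \<phi>" "f \<in> Vd"
  shows "f \<circ> \<phi> \<in> Vd"
proof -
  interpret L: linear sV sV \<phi> by fact
  show ?thesis unfolding ad_iff using assms(2) by (simp add: L.add L.scale ad_add_apply ad_scale_apply)
qed

lemma dact_eq: "dact \<phi> f = - (f \<circ> \<phi>)"
  by (simp add: dact_def fun_eq_iff)

lemma sm_dact:
  assumes "\<phi> \<in> glM sV W"
  shows "sm (dact \<phi>)"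
proof (rule smI)
  fix f assume "f \<in> Vd"
  then show "dact \<phi> f \<in> Vd" unfolding dact_eq using comp_ad[OF glM_lin[OF assms]] ad_neg by blast
next
  fix f g :: "'v \<Rightarrow> 'k"
  show "dact \<phi> (f + g) = dact \<phi> f + dact \<phi> g" by (simp add: dact_def fun_eq_iff)
next
  fix c and f :: "'v \<Rightarrow> 'k"
  show "dact \<phi> (fscale c f) = fscale c (dact \<phi> f)" by (simp add: dact_def fscale_def fun_eq_iff)
next
  fix w assume "w \<in> W"
  then show "dact \<phi> w \<in> W" unfolding dact_eq using glM_W[OF assms] W_neg by blast
qed

definition slot :: "nat \<Rightarrow> (('v \<Rightarrow> 'k) \<Rightarrow> ('v \<Rightarrow> 'k)) \<Rightarrow> nat \<Rightarrow> ('v \<Rightarrow> 'k) \<Rightarrow> ('v \<Rightarrow> 'k)" where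
  "slot i l = (\<lambda>_. id)(i := l)"

lemma good_slot: "sm l \<Longrightarrow> good (slot i l)"
  unfolding slot_def by (rule good_upd[OF good_id])

lemma appL_slot: "i < m \<Longrightarrow> length fs = m \<Longrightarrow> appL (slot i l) fs = fs[i := l (fs ! i)]"
  unfolding slot_def by (simp add: appL_upd2 appL_id)

definition Aop :: "('v \<Rightarrow> 'v) \<Rightarrow> 't \<Rightarrow> 't" where
  "Aop \<phi> = (\<lambda>t. \<Sum>i<m. MS (slot i (dact \<phi>)) t)"

lemma Aop_lin: "\<phi> \<in> glM sV W \<Longrightarrow> Vector_Spaces.linear sT sT (Aop \<phi>)"
  unfolding Aop_def
  by (rule TT.linear_compose_sum) (use MS_lin good_slot sm_dact in blast)

lemma Aop_gen: "\<phi> \<in> glM sV W \<Longrightarrow> fs \<in> Args \<Longrightarrow>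
   Aop \<phi> (\<iota> fs) = (\<Sum>i<m. \<iota> (fs[i := dact \<phi> (fs ! i)]))"
  unfolding Aop_def
  by (rule sum.cong) (auto simp: MS_gen good_slot sm_dact appL_slot args_iff)

lemma tens_act_Aop: "\<phi> \<in> glM sV W \<Longrightarrow> tens_act sV sT m \<iota> \<phi> (Aop \<phi>)"
  unfolding tens_act_def using Aop_lin Aop_gen by blast

lemma tens_act_unique: "\<phi> \<in> glM sV W \<Longrightarrow> tens_act sV sT m \<iota> \<phi> A \<Longrightarrow> A = Aop \<phi>"
  by (rule linT_eq) (auto simp: tens_act_def Aop_lin Aop_gen)

lemma P_commute:
  assumes s: "\<sigma> \<in> Sym m" and phi: "\<phi> \<in> glM sV W"
  shows "P \<sigma> \<circ> Aop \<phi> = Aop \<phi> \<circ> P \<sigma>"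
proof (rule linT_eq)
  show "Vector_Spaces.linear sT sT (P \<sigma> \<circ> Aop \<phi>)" using P_lin[OF s] Aop_lin[OF phi] linTT_comp by blast
  show "Vector_Spaces.linear sT sT (Aop \<phi> \<circ> P \<sigma>)" using P_lin[OF s] Aop_lin[OF phi] linTT_comp by blast
  fix fs assume fs: "fs \<in> Args"
  have sp: "\<sigma> permutes {..<m}" using s Sym_iff by blast
  have l: "length fs = m" using fs args_iff by blast
  let ?d = "dact \<phi>"
  interpret Ps: linear sT sT "P \<sigma>" using P_lin[OF s] .
  have d: "?d (fs ! i) \<in> Vd" if "i < m" for i
    using sm_Vd[OF sm_dact[OF phi]] fs that args_iff by blast
  have "(P \<sigma> \<circ> Aop \<phi>) (\<iota> fs) = (\<Sum>i<m. P \<sigma> (\<iota> (fs[i := ?d (fs ! i)])))"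
    by (simp add: Aop_gen[OF phi fs] Ps.sum)
  also have "\<dots> = (\<Sum>i<m. \<iota> ((permute_list (inv \<sigma>) fs)[\<sigma> i := ?d (fs ! i)]))"
    by (rule sum.cong[OF refl]) (simp add: P_gen[OF s] args_upd[OF fs d] perm_upd[OF s l])
  also have "\<dots> = (\<Sum>i<m. \<iota> ((permute_list (inv \<sigma>) fs)[\<sigma> i := ?d ((permute_list (inv \<sigma>) fs) ! (\<sigma> i))]))"
  proof (rule sum.cong[OF refl])
    fix i assume i: "i \<in> {..<m}"
    have si: "\<sigma> i < m" using permutes_in_image[OF sp] i by auto
    have "permute_list (inv \<sigma>) fs ! (\<sigma> i) = fs ! i"
      using perm_nth[OF s l si] permutes_inverses(2)[OF sp] by simp
    then show "\<iota> ((permute_list (inv \<sigma>) fs)[\<sigma> i := ?d (fs ! i)]) =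
       \<iota> ((permute_list (inv \<sigma>) fs)[\<sigma> i := ?d ((permute_list (inv \<sigma>) fs) ! (\<sigma> i))])" by simp
  qed
  also have "\<dots> = (\<Sum>j<m. \<iota> ((permute_list (inv \<sigma>) fs)[j := ?d ((permute_list (inv \<sigma>) fs) ! j)]))"
    by (rule sum.reindex_bij_betw[OF permutes_imp_bij[OF sp]])
  also have "\<dots> = (Aop \<phi> \<circ> P \<sigma>) (\<iota> fs)"
    by (simp add: P_gen[OF s fs] Aop_gen[OF phi perm_args[OF s fs]])
  finally show "(P \<sigma> \<circ> Aop \<phi>) (\<iota> fs) = (Aop \<phi> \<circ> P \<sigma>) (\<iota> fs)" .
qed

lemma PR_commute:
  assumes phi: "\<phi> \<in> glM sV W"
  shows "PR a \<circ> Aop \<phi> = Aop \<phi> \<circ> PR a"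
proof
  fix t
  interpret A: linear sT sT "Aop \<phi>" using Aop_lin[OF phi] .
  have "(Aop \<phi> \<circ> PR a) t = (\<Sum>\<sigma>\<in>Sym m. sT (a \<sigma>) (Aop \<phi> (P \<sigma> t)))"
    by (simp add: PR_apply A.sum A.scale)
  also have "\<dots> = (PR a \<circ> Aop \<phi>) t"
    unfolding comp_apply PR_apply
    by (rule sum.cong[OF refl]) (metis P_commute[OF _ phi] comp_apply)
  finally show "(PR a \<circ> Aop \<phi>) t = (Aop \<phi> \<circ> PR a) t" by simp
qed

lemma PR_gl_end: "PR a \<in> gl_end sV W sT m \<iota>"
  unfolding gl_end_def using PR_lin PR_commute tens_act_unique by blast

lemma gl_end_commute: "E \<in> gl_end sV W sT m \<iota> \<Longrightarrow> \<phi> \<in> glM sV W \<Longrightarrow> E \<circ> Aop \<phi> = Aop \<phi> \<circ> E"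
  unfolding gl_end_def using tens_act_Aop by blast

lemma gl_end_lin: "E \<in> gl_end sV W sT m \<iota> \<Longrightarrow> Vector_Spaces.linear sT sT E"
  unfolding gl_end_def by blast

end

lemma sumf_apply: "(\<Sum>i\<in>I. g i) x = (\<Sum>i\<in>I. g i x)"
  by (induct I rule: infinite_finite_induct) auto

context ctx begin

definition biorth :: "'v list \<times> ('v \<Rightarrow> 'k) list \<Rightarrow> bool" where
  "biorth st \<longleftrightarrow> length (fst st) = length (snd st) \<and> set (snd st) \<subseteq> W \<and>
     (\<forall>i<length (fst st). \<forall>j<length (fst st). (snd st ! i) (fst st ! j) = (if i = j then 1 else 0))"

definition addV :: "'v \<Rightarrow> 'v list \<times> ('v \<Rightarrow> 'k) list \<Rightarrow> 'v list \<times> ('v \<Rightarrow> 'k) list" where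
  "addV b st = (if b \<in> V.span (set (fst st)) then st else
     (let vl = fst st; wl = snd st; n = length vl;
          v = b - (\<Sum>i<n. sV ((wl ! i) b) (vl ! i));
          f = (SOME f. f \<in> W \<and> f v \<noteq> 0);
          f' = f - (\<Sum>i<n. fscale (f (vl ! i)) (wl ! i))
      in (vl @ [v], wl @ [fscale (1 / f v) f'])))"

definition addW :: "('v \<Rightarrow> 'k) \<Rightarrow> 'v list \<times> ('v \<Rightarrow> 'k) list \<Rightarrow> 'v list \<times> ('v \<Rightarrow> 'k) list" where
  "addW c st = (if c \<in> F.span (set (snd st)) then st else
     (let vl = fst st; wl = snd st; n = length vl;
          w = c - (\<Sum>i<n. fscale (c (vl ! i)) (wl ! i));
          x = (SOME x. w x \<noteq> 0);
          v' = x - (\<Sum>i<n. sV ((wl ! i) x) (vl ! i))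
      in (vl @ [sV (1 / w x) v'], wl @ [w])))"

lemma nondeg: "v \<noteq> 0 \<Longrightarrow> \<exists>f\<in>W. f v \<noteq> 0"
  using mp unfolding mackey_pair_def by blast

lemma ad_minus_apply: "f \<in> Vd \<Longrightarrow> f (x - y) = f x - f y"
  by (metis ad_add_apply add_diff_cancel_right' diff_add_cancel eq_diff_eq)

lemma W_ad: "f \<in> W \<Longrightarrow> f \<in> Vd" using W_sub by blast

lemma biorth_W: "biorth st \<Longrightarrow> i < length (fst st) \<Longrightarrow> snd st ! i \<in> W"
  unfolding biorth_def by (metis nth_mem subsetD)

lemma addV_prop:
  assumes bo: "biorth st"
  shows "biorth (addV b st) \<and> (\<exists>xs ys. fst (addV b st) = fst st @ xs \<and> snd (addV b st) = snd st @ ys)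
     \<and> b \<in> V.span (set (fst (addV b st)))"
proof (cases "b \<in> V.span (set (fst st))")
  case True
  then show ?thesis using bo by (simp add: addV_def)
next
  case False
  obtain vl wl where st: "st = (vl, wl)" by fastforce
  define n where "n = length vl"
  have lw: "length wl = n" using bo st n_def by (simp add: biorth_def)
  have wW: "wl ! i \<in> W" if "i < n" for i using biorth_W[OF bo] that st n_def by simp
  have wV: "wl ! i \<in> Vd" if "i < n" for i using wW[OF that] W_ad by blast
  have bi: "(wl ! i) (vl ! j) = (if i = j then 1 else 0)" if "i < n" "j < n" for i j
    using bo that st n_def by (simp add: biorth_def)
  define v where "v = b - (\<Sum>i<n. sV ((wl ! i) b) (vl ! i))"
  have wv: "(wl ! j) v = 0" if j: "j < n" for j
  proof -
    have "(wl ! j) v = (wl ! j) b - (\<Sum>i<n. (wl ! i) b * (wl ! j) (vl ! i))"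
      unfolding v_def by (simp add: ad_minus_apply[OF wV[OF j]] ad_sum_apply[OF wV[OF j]] ad_scale_apply[OF wV[OF j]])
    also have "(\<Sum>i<n. (wl ! i) b * (wl ! j) (vl ! i)) = (\<Sum>i<n. if i = j then (wl ! i) b else 0)"
      by (rule sum.cong[OF refl]) (simp add: bi j)
    also have "\<dots> = (wl ! j) b" using j by (simp add: sum.delta)
    finally show ?thesis by simp
  qed
  have v0: "v \<noteq> 0"
  proof
    assume "v = 0"
    then have "b = (\<Sum>i<n. sV ((wl ! i) b) (vl ! i))" by (simp add: v_def)
    also have "\<dots> \<in> V.span (set vl)"
      by (intro V.span_sum V.span_scale V.span_base) (simp add: n_def)
    finally show False using False st by simp
  qed
  define f where "f = (SOME f. f \<in> W \<and> f v \<noteq> 0)"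
  have f: "f \<in> W \<and> f v \<noteq> 0" unfolding f_def by (rule someI_ex[of "\<lambda>f. f \<in> W \<and> f v \<noteq> 0"]) (use nondeg[OF v0] in blast)
  define f' where "f' = f - (\<Sum>i<n. fscale (f (vl ! i)) (wl ! i))"
  have f'W: "f' \<in> W" unfolding f'_def using f wW by (intro W_diff W_sum W_scale) auto
  have f'vl: "f' (vl ! j) = 0" if j: "j < n" for j
  proof -
    have "f' (vl ! j) = f (vl ! j) - (\<Sum>i<n. f (vl ! i) * (wl ! i) (vl ! j))"
      by (simp add: f'_def sumf_apply fscale_def)
    also have "(\<Sum>i<n. f (vl ! i) * (wl ! i) (vl ! j)) = (\<Sum>i<n. if i = j then f (vl ! i) else 0)"
      by (rule sum.cong[OF refl]) (simp add: bi j)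
    also have "\<dots> = f (vl ! j)" using j by (simp add: sum.delta)
    finally show ?thesis by simp
  qed
  have f'v: "f' v = f v"
  proof -
    have "f' v = f v - (\<Sum>i<n. f (vl ! i) * (wl ! i) v)"
      by (simp add: f'_def sumf_apply fscale_def)
    also have "(\<Sum>i<n. f (vl ! i) * (wl ! i) v) = 0" by (rule sum.neutral) (simp add: wv)
    finally show ?thesis by simp
  qed
  define w where "w = fscale (1 / f v) f'"
  have wW': "w \<in> W" unfolding w_def by (rule W_scale[OF f'W])
  have wvl: "w (vl ! j) = 0" if "j < n" for j using f'vl[OF that] by (simp add: w_def fscale_def)
  have wvv: "w v = 1" using f'v f by (simp add: w_def fscale_def)
  have add: "addV b st = (vl @ [v], wl @ [w])"
    using False unfolding addV_def st by (simp add: Let_def n_def[symmetric] v_def[symmetric] f_def[symmetric] f'_def[symmetric] w_def[symmetric])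
  have bo': "biorth (vl @ [v], wl @ [w])"
    unfolding biorth_def
  proof (intro conjI allI impI)
    show "length (fst (vl @ [v], wl @ [w])) = length (snd (vl @ [v], wl @ [w]))" using lw n_def by simp
    show "set (snd (vl @ [v], wl @ [w])) \<subseteq> W" using bo st wW' by (auto simp: biorth_def)
    fix i j assume i: "i < length (fst (vl @ [v], wl @ [w]))" and j: "j < length (fst (vl @ [v], wl @ [w]))"
    then have i': "i \<le> n" and j': "j \<le> n" using n_def by auto
    show "(snd (vl @ [v], wl @ [w]) ! i) (fst (vl @ [v], wl @ [w]) ! j) = (if i = j then 1 else 0)"
    proof (cases "i = n")
      case True
      then show ?thesis using j' wvl wvv lw n_def by (cases "j = n") (auto simp: nth_append)
    next
      case False
      then have "i < n" using i' by simp
      then show ?thesis using j' wv bi lw n_def by (cases "j = n") (auto simp: nth_append)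
    qed
  qed
  have "b = v + (\<Sum>i<n. sV ((wl ! i) b) (vl ! i))" by (simp add: v_def)
  also have "\<dots> \<in> V.span (set (vl @ [v]))"
    by (intro V.span_add V.span_sum V.span_scale V.span_base) (auto simp: n_def)
  finally show ?thesis using add bo' st by auto
qed

lemma addW_prop:
  assumes bo: "biorth st" and c: "c \<in> W"
  shows "biorth (addW c st) \<and> (\<exists>xs ys. fst (addW c st) = fst st @ xs \<and> snd (addW c st) = snd st @ ys)
     \<and> c \<in> F.span (set (snd (addW c st)))"
proof (cases "c \<in> F.span (set (snd st))")
  case True
  then show ?thesis using bo by (simp add: addW_def)
next
  case False
  obtain vl wl where st: "st = (vl, wl)" by fastforce
  define n where "n = length vl"
  have lw: "length wl = n" using bo st n_def by (simp add: biorth_def)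
  have wW: "wl ! i \<in> W" if "i < n" for i using biorth_W[OF bo] that st n_def by simp
  have wV: "wl ! i \<in> Vd" if "i < n" for i using wW[OF that] W_ad by blast
  have bi: "(wl ! i) (vl ! j) = (if i = j then 1 else 0)" if "i < n" "j < n" for i j
    using bo that st n_def by (simp add: biorth_def)
  define w where "w = c - (\<Sum>i<n. fscale (c (vl ! i)) (wl ! i))"
  have wW': "w \<in> W" unfolding w_def using c wW by (intro W_diff W_sum W_scale) auto
  have wV': "w \<in> Vd" using wW' W_ad by blast
  have wvl: "w (vl ! j) = 0" if j: "j < n" for j
  proof -
    have "w (vl ! j) = c (vl ! j) - (\<Sum>i<n. c (vl ! i) * (wl ! i) (vl ! j))"
      by (simp add: w_def sumf_apply fscale_def)
    also have "(\<Sum>i<n. c (vl ! i) * (wl ! i) (vl ! j)) = (\<Sum>i<n. if i = j then c (vl ! i) else 0)"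
      by (rule sum.cong[OF refl]) (simp add: bi j)
    also have "\<dots> = c (vl ! j)" using j by (simp add: sum.delta)
    finally show ?thesis by simp
  qed
  have w0: "\<exists>x. w x \<noteq> 0"
  proof (rule ccontr)
    assume "\<not> (\<exists>x. w x \<noteq> 0)"
    then have "w = 0" by (auto simp: fun_eq_iff)
    then have "c = (\<Sum>i<n. fscale (c (vl ! i)) (wl ! i))" by (simp add: w_def)
    also have "\<dots> \<in> F.span (set wl)"
      by (intro F.span_sum F.span_scale F.span_base) (simp add: lw)
    finally show False using False st by simp
  qed
  define x where "x = (SOME x. w x \<noteq> 0)"
  have x: "w x \<noteq> 0" unfolding x_def by (rule someI_ex[OF w0])
  define v' where "v' = x - (\<Sum>i<n. sV ((wl ! i) x) (vl ! i))"
  have wlv': "(wl ! j) v' = 0" if j: "j < n" for j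
  proof -
    have "(wl ! j) v' = (wl ! j) x - (\<Sum>i<n. (wl ! i) x * (wl ! j) (vl ! i))"
      unfolding v'_def by (simp add: ad_minus_apply[OF wV[OF j]] ad_sum_apply[OF wV[OF j]] ad_scale_apply[OF wV[OF j]])
    also have "(\<Sum>i<n. (wl ! i) x * (wl ! j) (vl ! i)) = (\<Sum>i<n. if i = j then (wl ! i) x else 0)"
      by (rule sum.cong[OF refl]) (simp add: bi j)
    also have "\<dots> = (wl ! j) x" using j by (simp add: sum.delta)
    finally show ?thesis by simp
  qed
  have wv': "w v' = w x"
  proof -
    have "w v' = w x - (\<Sum>i<n. (wl ! i) x * w (vl ! i))"
      unfolding v'_def by (simp add: ad_minus_apply[OF wV'] ad_sum_apply[OF wV'] ad_scale_apply[OF wV'])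
    also have "(\<Sum>i<n. (wl ! i) x * w (vl ! i)) = 0" by (rule sum.neutral) (simp add: wvl)
    finally show ?thesis by simp
  qed
  define v where "v = sV (1 / w x) v'"
  have wlv: "(wl ! j) v = 0" if "j < n" for j
    using wlv'[OF that] by (simp add: v_def ad_scale_apply[OF wV[OF that]])
  have wv: "w v = 1" using wv' x by (simp add: v_def ad_scale_apply[OF wV'])
  have add: "addW c st = (vl @ [v], wl @ [w])"
    unfolding addW_def st fst_conv snd_conv Let_def n_def[symmetric] w_def[symmetric] x_def[symmetric]
      v'_def[symmetric] v_def[symmetric] using False st by simp
  have bo': "biorth (vl @ [v], wl @ [w])"
    unfolding biorth_def
  proof (intro conjI allI impI)
    show "length (fst (vl @ [v], wl @ [w])) = length (snd (vl @ [v], wl @ [w]))" using lw n_def by simp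
    show "set (snd (vl @ [v], wl @ [w])) \<subseteq> W" using bo st wW' by (auto simp: biorth_def)
    fix i j assume i: "i < length (fst (vl @ [v], wl @ [w]))" and j: "j < length (fst (vl @ [v], wl @ [w]))"
    then have i': "i \<le> n" and j': "j \<le> n" using n_def by auto
    show "(snd (vl @ [v], wl @ [w]) ! i) (fst (vl @ [v], wl @ [w]) ! j) = (if i = j then 1 else 0)"
    proof (cases "i = n")
      case True
      then show ?thesis using j' wvl wv lw n_def by (cases "j = n") (auto simp: nth_append)
    next
      case False
      then have "i < n" using i' by simp
      then show ?thesis using j' wlv bi lw n_def by (cases "j = n") (auto simp: nth_append)
    qed
  qed
  have "c = w + (\<Sum>i<n. fscale (c (vl ! i)) (wl ! i))" by (simp add: w_def)
  also have "\<dots> \<in> F.span (set (wl @ [w]))"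
    by (intro F.span_add F.span_sum F.span_scale F.span_base) (auto simp: lw)
  finally show ?thesis using add bo' st by auto
qed


definition Bb :: "'v set" where
  "Bb = (SOME B. \<not> V.dependent B \<and> V.span B = UNIV \<and> countable B \<and> infinite B)"
definition Cc :: "('v \<Rightarrow> 'k) set" where
  "Cc = (SOME C. C \<subseteq> W \<and> \<not> F.dependent C \<and> F.span C = W \<and> countable C \<and> infinite C)"

lemma Bb: "V.independent Bb \<and> V.span Bb = UNIV \<and> countable Bb \<and> infinite Bb"
proof -
  have "\<exists>B. \<not> V.dependent B \<and> V.span B = UNIV \<and> countable B \<and> infinite B"
    using mp unfolding mackey_pair_def by blast
  then show ?thesis unfolding Bb_def by (rule someI_ex)
qed

lemma Cc: "Cc \<subseteq> W \<and> F.independent Cc \<and> F.span Cc = W \<and> countable Cc \<and> infinite Cc"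
proof -
  have "\<exists>C. C \<subseteq> W \<and> \<not> F.dependent C \<and> F.span C = W \<and> countable C \<and> infinite C"
    using mp unfolding mackey_pair_def by blast
  then show ?thesis unfolding Cc_def by (rule someI_ex)
qed

definition "bb = from_nat_into Bb"
definition "cc = from_nat_into Cc"

lemma bb_bij: "bij_betw bb UNIV Bb" unfolding bb_def using Bb bij_betw_from_nat_into by blast
lemma cc_bij: "bij_betw cc UNIV Cc" unfolding cc_def using Cc bij_betw_from_nat_into by blast
lemma cc_W: "cc n \<in> W" using cc_bij Cc unfolding bij_betw_def by blast

definition stS :: "nat \<Rightarrow> 'v list \<times> ('v \<Rightarrow> 'k) list" where
  "stS n = rec_nat ([], []) (\<lambda>n s. addW (cc n) (addV (bb n) s)) n"

lemma stS_0: "stS 0 = ([], [])" by (simp add: stS_def)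
lemma stS_Suc: "stS (Suc n) = addW (cc n) (addV (bb n) (stS n))" by (simp add: stS_def)

lemma stS_bo: "biorth (stS n)"
proof (induct n)
  case 0
  show ?case by (simp add: stS_0 biorth_def)
next
  case (Suc n)
  then show ?case unfolding stS_Suc using addV_prop addW_prop cc_W by blast
qed

lemma stS_ext1: "\<exists>xs ys. fst (stS (Suc n)) = fst (stS n) @ xs \<and> snd (stS (Suc n)) = snd (stS n) @ ys"
proof -
  obtain xs ys where 1: "fst (addV (bb n) (stS n)) = fst (stS n) @ xs" "snd (addV (bb n) (stS n)) = snd (stS n) @ ys"
    using addV_prop[OF stS_bo] by blast
  obtain xs' ys' where 2: "fst (addW (cc n) (addV (bb n) (stS n))) = fst (addV (bb n) (stS n)) @ xs'"
     "snd (addW (cc n) (addV (bb n) (stS n))) = snd (addV (bb n) (stS n)) @ ys'"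
    using addW_prop[OF conjunct1[OF addV_prop[OF stS_bo]] cc_W] by blast
  show ?thesis unfolding stS_Suc using 1 2 by auto
qed

lemma stS_ext: "n \<le> N \<Longrightarrow> \<exists>xs ys. fst (stS N) = fst (stS n) @ xs \<and> snd (stS N) = snd (stS n) @ ys"
proof (induct N rule: dec_induct)
  case base
  show ?case by auto
next
  case (step N)
  then show ?case using stS_ext1[of N] by (metis append.assoc)
qed

lemma stS_set_mono: "n \<le> N \<Longrightarrow> set (fst (stS n)) \<subseteq> set (fst (stS N)) \<and> set (snd (stS n)) \<subseteq> set (snd (stS N))"
  using stS_ext by fastforce

lemma bb_in: "bb n \<in> V.span (set (fst (stS (Suc n))))"
proof -
  have "bb n \<in> V.span (set (fst (addV (bb n) (stS n))))" using addV_prop[OF stS_bo] by blast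
  moreover obtain xs where "fst (stS (Suc n)) = fst (addV (bb n) (stS n)) @ xs"
    unfolding stS_Suc using addW_prop[OF conjunct1[OF addV_prop[OF stS_bo]] cc_W] by blast
  ultimately show ?thesis using V.span_mono[of "set (fst (addV (bb n) (stS n)))" "set (fst (stS (Suc n)))"] by auto
qed

lemma cc_in: "cc n \<in> F.span (set (snd (stS (Suc n))))"
  unfolding stS_Suc using addW_prop[OF conjunct1[OF addV_prop[OF stS_bo]] cc_W] by blast

lemma stS_len: "n \<le> length (fst (stS n))"
proof -
  let ?A = "bb ` {..<n}"
  have inj: "inj bb" using bb_bij bij_betw_def by blast
  have sub: "?A \<subseteq> V.span (set (fst (stS n)))"
  proof
    fix x assume "x \<in> ?A"
    then obtain k where k: "k < n" "x = bb k" by blast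
    have "set (fst (stS (Suc k))) \<subseteq> set (fst (stS n))" using stS_set_mono[of "Suc k" n] k by simp
    then show "x \<in> V.span (set (fst (stS n)))" using bb_in[of k] k V.span_mono by blast
  qed
  have ind: "V.independent ?A"
    by (rule V.independent_mono[of Bb]) (use Bb bb_bij in \<open>auto simp: bij_betw_def\<close>)
  have "card ?A \<le> card (set (fst (stS n)))" using V.independent_span_bound[OF _ ind sub] by simp
  also have "\<dots> \<le> length (fst (stS n))" by (rule card_length)
  finally show ?thesis using card_image[OF inj_on_subset[OF inj]] by simp
qed

definition "mv j = fst (stS (Suc j)) ! j"
definition "mw j = snd (stS (Suc j)) ! j"

lemma stS_nth:
  assumes "i < length (fst (stS N))"
  shows "fst (stS N) ! i = mv i \<and> snd (stS N) ! i = mw i"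
proof (cases "N \<le> Suc i")
  case True
  obtain xs ys where e: "fst (stS (Suc i)) = fst (stS N) @ xs" "snd (stS (Suc i)) = snd (stS N) @ ys"
    using stS_ext[OF True] by blast
  have "length (snd (stS N)) = length (fst (stS N))" using stS_bo[of N] by (simp add: biorth_def)
  then show ?thesis using assms e by (simp add: mv_def mw_def nth_append)
next
  case False
  obtain xs ys where e: "fst (stS N) = fst (stS (Suc i)) @ xs" "snd (stS N) = snd (stS (Suc i)) @ ys"
    using stS_ext[of "Suc i" N] False by auto
  have l: "i < length (fst (stS (Suc i)))" using stS_len[of "Suc i"] by simp
  have "length (snd (stS (Suc i))) = length (fst (stS (Suc i)))" using stS_bo[of "Suc i"] by (simp add: biorth_def)
  then show ?thesis using l e by (simp add: mv_def mw_def nth_append)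
qed

lemma mw_mv: "mw n (mv k) = (if n = k then 1 else 0)"
proof -
  define N where "N = Suc (max n k)"
  have l: "n < length (fst (stS N))" "k < length (fst (stS N))"
    using stS_len[of N] unfolding N_def by auto
  have "(snd (stS N) ! n) (fst (stS N) ! k) = (if n = k then 1 else 0)"
    using stS_bo[of N] l by (simp add: biorth_def)
  then show ?thesis using stS_nth[OF l(1)] stS_nth[OF l(2)] by simp
qed

lemma mw_W: "mw n \<in> W"
proof -
  have l: "n < length (fst (stS (Suc n)))" using stS_len[of "Suc n"] by simp
  show ?thesis using biorth_W[OF stS_bo l] stS_nth[OF l] by simp
qed

lemma mv_set: "set (fst (stS N)) \<subseteq> range mv"
  using stS_nth by (auto simp: in_set_conv_nth)

lemma mw_set: "set (snd (stS N)) \<subseteq> range mw"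
proof
  fix x assume "x \<in> set (snd (stS N))"
  then obtain i where i: "i < length (snd (stS N))" "x = snd (stS N) ! i" by (auto simp: in_set_conv_nth)
  have "i < length (fst (stS N))" using i stS_bo[of N] by (simp add: biorth_def)
  then show "x \<in> range mw" using stS_nth i by auto
qed

interpretation VKp: vector_space_pair sV "(*) :: 'k \<Rightarrow> 'k \<Rightarrow> 'k" by unfold_locales

lemma Mackey: "\<exists>(vb :: nat \<Rightarrow> 'v) ws. V.independent (range vb) \<and> V.span (range vb) = UNIV \<and> inj vb \<and>
     (\<forall>n. ws n \<in> W) \<and> (\<forall>n k. ws n (vb k) = (if n = k then 1 else 0)) \<and> W \<subseteq> F.span (range ws)"
proof (rule exI[where x=mv], rule exI[where x=mw], intro conjI allI)
  show inj: "inj mv"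
  proof (rule injI)
    fix j k assume "mv j = mv k"
    then have "mw j (mv k) = 1" using mw_mv[of j j] by simp
    then show "j = k" using mw_mv[of j k] by (simp split: if_splits)
  qed
  show "V.independent (range mv)"
    unfolding V.dependent_def
  proof
    assume "\<exists>a\<in>range mv. a \<in> V.span (range mv - {a})"
    then obtain j where j: "mv j \<in> V.span (range mv - {mv j})" by blast
    have lin: "Vector_Spaces.linear sV (*) (mw j)" using mw_W[of j] W_sub by (auto simp: alg_dual_def)
    have "mw j (mv j) = 0"
    proof (rule VKp.linear_eq_0_on_span[OF lin _ j])
      fix x assume "x \<in> range mv - {mv j}"
      then obtain k where "x = mv k" "k \<noteq> j" by auto
      then show "mw j x = 0" by (simp add: mw_mv)
    qed
    then show False using mw_mv[of j j] by simp
  qed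
  have "Bb \<subseteq> V.span (range mv)"
  proof
    fix b assume "b \<in> Bb"
    then obtain n where "b = bb n" using bb_bij by (auto simp: bij_betw_def)
    then show "b \<in> V.span (range mv)" using bb_in[of n] V.span_mono[OF mv_set] by blast
  qed
  then have "V.span Bb \<subseteq> V.span (range mv)" using V.span_mono V.span_span by metis
  then show "V.span (range mv) = UNIV" using Bb by auto
  show "mw n \<in> W" for n by (rule mw_W)
  show "mw n (mv k) = (if n = k then 1 else 0)" for n k by (rule mw_mv)
  have "Cc \<subseteq> F.span (range mw)"
  proof
    fix c assume "c \<in> Cc"
    then obtain n where "c = cc n" using cc_bij by (auto simp: bij_betw_def)
    then show "c \<in> F.span (range mw)" using cc_in[of n] F.span_mono[OF mw_set] by blast
  qed
  then have "F.span Cc \<subseteq> F.span (range mw)" using F.span_mono F.span_span by metis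
  then show "W \<subseteq> F.span (range mw)" using Cc by auto
qed

end

lemma sum_fun_apply: "(\<Sum>i\<in>I. g i) x = (\<Sum>i\<in>I. g i x)"
  by (induct I rule: infinite_finite_induct) auto

context ctx begin

definition DB :: "(nat \<Rightarrow> 'v) \<Rightarrow> (nat \<Rightarrow> 'v \<Rightarrow> 'k) \<Rightarrow> bool" where
  "DB vb ws \<longleftrightarrow> V.independent (range vb) \<and> V.span (range vb) = UNIV \<and> inj vb \<and>
     (\<forall>n. ws n \<in> W) \<and> (\<forall>n k. ws n (vb k) = (if n = k then 1 else 0)) \<and> W \<subseteq> F.span (range ws)"

lemma DB_ex: "\<exists>vb ws. DB vb ws"
  using Mackey unfolding DB_def by blast

definition "vb = fst (SOME p. DB (fst p) (snd p))"
definition "ws = snd (SOME p. DB (fst p) (snd p))"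

lemma DB: "DB vb ws"
proof -
  obtain a b where "DB a b" using DB_ex by blast
  then have "DB (fst (a, b)) (snd (a, b))" by simp
  then have "DB (fst (SOME p. DB (fst p) (snd p))) (snd (SOME p. DB (fst p) (snd p)))"
    by (rule someI[where P="\<lambda>p. DB (fst p) (snd p)"])
  then show ?thesis by (simp add: vb_def ws_def)
qed

lemma vb_indep: "V.independent (range vb)" using DB DB_def by blast
lemma vb_span: "V.span (range vb) = UNIV" using DB DB_def by blast
lemma vb_inj: "inj vb" using DB DB_def by blast
lemma ws_W: "ws n \<in> W" using DB DB_def by blast
lemma ws_vb: "ws n (vb k) = (if n = k then 1 else 0)" using DB DB_def by blast
lemma W_span_ws: "W \<subseteq> F.span (range ws)" using DB DB_def by blast

interpretation VK: vector_space_pair sV "(*) :: 'k \<Rightarrow> 'k \<Rightarrow> 'k" by unfold_locales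
interpretation VV: vector_space_pair sV sV by unfold_locales

definition fun_of :: "(nat \<Rightarrow> 'k) \<Rightarrow> 'v \<Rightarrow> 'k" where
  "fun_of g = VK.construct (range vb) (\<lambda>x. g (inv vb x))"

lemma fun_of_ad: "fun_of g \<in> Vd"
  unfolding fun_of_def alg_dual_def using VK.linear_construct[OF vb_indep] by blast

lemma fun_of_vb[simp]: "fun_of g (vb n) = g n"
  unfolding fun_of_def using VK.construct_basis[OF vb_indep, of "vb n"] vb_inj by simp

lemma ad_ext:
  assumes "f \<in> Vd" "g \<in> Vd" "\<And>n. f (vb n) = g (vb n)"
  shows "f = g"
proof
  fix x
  show "f x = g x"
    by (rule VK.linear_eq_on[where B="range vb"]) (use assms vb_span in \<open>auto simp: alg_dual_def\<close>)
qed

lemma ad_fun_of: "f \<in> Vd \<Longrightarrow> f = fun_of (\<lambda>n. f (vb n))"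
  by (rule ad_ext) (auto simp: fun_of_ad)

definition map_of :: "(nat \<Rightarrow> 'v) \<Rightarrow> 'v \<Rightarrow> 'v" where
  "map_of h = VV.construct (range vb) (\<lambda>x. h (inv vb x))"

lemma map_of_lin: "Vector_Spaces.linear sV sV (map_of h)"
  unfolding map_of_def using VV.linear_construct[OF vb_indep] by blast

lemma map_of_vb[simp]: "map_of h (vb n) = h n"
  unfolding map_of_def using VV.construct_basis[OF vb_indep, of "vb n"] vb_inj by simp

definition supp :: "('v \<Rightarrow> 'k) \<Rightarrow> nat set" where
  "supp f = {n. f (vb n) \<noteq> 0}"

lemma fin_subspace: "F.subspace {f. finite (supp f)}"
  unfolding F.subspace_def
proof (intro conjI ballI allI)
  show "0 \<in> {f. finite (supp f)}" by (simp add: supp_def)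
  fix x y :: "'v \<Rightarrow> 'k" assume "x \<in> {f. finite (supp f)}" "y \<in> {f. finite (supp f)}"
  then show "x + y \<in> {f. finite (supp f)}"
    by (auto intro: finite_subset[of _ "supp x \<union> supp y"] simp: supp_def)
next
  fix c and x :: "'v \<Rightarrow> 'k" assume "x \<in> {f. finite (supp f)}"
  then show "fscale c x \<in> {f. finite (supp f)}"
    by (auto intro: finite_subset[of _ "supp x"] simp: supp_def fscale_def)
qed

lemma W_fin: assumes "f \<in> W" shows "finite (supp f)"
proof -
  have "f \<in> F.span (range ws)" using assms W_span_ws by blast
  then show ?thesis
  proof (induct rule: F.span_induct)
    case base
    show ?case using fin_subspace by simp
  next
    case (step x)
    then obtain n where "x = ws n" by blast
    then have "supp x \<subseteq> {n}" by (auto simp: ws_vb supp_def)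
    then show ?case by (simp add: finite_subset)
  qed
qed

lemma W_char:
  assumes f: "f \<in> Vd" and fin: "finite (supp f)"
  shows "f \<in> W"
proof -
  let ?g = "\<Sum>n\<in>supp f. fscale (f (vb n)) (ws n)"
  have g: "?g \<in> W" by (intro W_sum W_scale ws_W)
  have "f = ?g"
  proof (rule ad_ext[OF f])
    show "?g \<in> Vd" using g W_sub by blast
    fix k
    have "?g (vb k) = (\<Sum>n\<in>supp f. f (vb n) * (if n = k then 1 else 0))"
      by (simp add: sum_fun_apply fscale_def ws_vb)
    also have "\<dots> = (\<Sum>n\<in>supp f. if n = k then f (vb n) else 0)"
      by (rule sum.cong) auto
    also have "\<dots> = f (vb k)" using fin by (simp add: sum.delta supp_def)
    finally show "f (vb k) = ?g (vb k)" by simp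
  qed
  with g show ?thesis by simp
qed

lemma W_iff: "f \<in> W \<longleftrightarrow> f \<in> Vd \<and> finite (supp f)"
  using W_fin W_char W_sub by blast

lemma glM_of:
  assumes "\<And>f. f \<in> W \<Longrightarrow> finite {j. f (h j) \<noteq> 0}"
  shows "map_of h \<in> glM sV W"
  unfolding glM_def
proof (intro CollectI conjI ballI)
  show "Vector_Spaces.linear sV sV (map_of h)" by (rule map_of_lin)
  fix f assume f: "f \<in> W"
  show "f \<circ> map_of h \<in> W"
    by (rule W_char) (use comp_ad[OF map_of_lin] f W_sub assms[OF f] in \<open>auto simp: supp_def\<close>)
qed

lemma sm_comp_glM: "\<phi> \<in> glM sV W \<Longrightarrow> sm (\<lambda>f. f \<circ> \<phi>)"
proof (rule smI)
  assume phi: "\<phi> \<in> glM sV W"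
  show "f \<circ> \<phi> \<in> Vd" if "f \<in> Vd" for f using comp_ad[OF glM_lin[OF phi] that] .
  show "w \<circ> \<phi> \<in> W" if "w \<in> W" for w using glM_W[OF phi that] .
qed (auto simp: fscale_def fun_eq_iff)

end

context ctx begin

interpretation VK: vector_space_pair sV "(*) :: 'k \<Rightarrow> 'k \<Rightarrow> 'k" by unfold_locales
interpretation FK: vector_space_pair "fscale :: 'k \<Rightarrow> ('v \<Rightarrow> 'k) \<Rightarrow> _" "(*) :: 'k \<Rightarrow> 'k \<Rightarrow> 'k" by unfold_locales

lemma ad_diff_apply: "f \<in> Vd \<Longrightarrow> f (x - y) = f x - f y"
  by (metis ad_add_apply add_diff_cancel_right' diff_add_cancel eq_diff_eq)

lemma fscale_apply[simp]: "fscale c f x = c * f x" by (simp add: fscale_def)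

definition e :: "nat \<Rightarrow> 'v \<Rightarrow> 'k" where
  "e k = fun_of (\<lambda>n. if n mod m = k then 1 else 0)"

lemma e_ad: "e k \<in> Vd" unfolding e_def by (rule fun_of_ad)
lemma e_vb: "e k (vb n) = (if n mod m = k then 1 else 0)" unfolding e_def by simp

lemma e_notW: assumes "k < m" shows "e k \<notin> W"
proof
  assume "e k \<in> W"
  then have fin: "finite (supp (e k))" by (rule W_fin)
  have "range (\<lambda>j. k + m * j) \<subseteq> supp (e k)" using assms by (auto simp: supp_def e_vb)
  moreover have "infinite (range (\<lambda>j. k + m * j))"
    by (rule range_inj_infinite) (use assms in \<open>auto simp: inj_def\<close>)
  ultimately show False using fin finite_subset by blast
qed

definition Dm :: "nat \<Rightarrow> 'v \<Rightarrow> 'v" where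
  "Dm k = map_of (\<lambda>j. if j mod m = k then vb j else 0)"

lemma Dm_glM: "Dm k \<in> glM sV W"
  unfolding Dm_def
proof (rule glM_of)
  fix f assume f: "f \<in> W"
  have "{j. f (if j mod m = k then vb j else 0) \<noteq> 0} \<subseteq> supp f"
    using ad_zero_apply W_sub f by (auto simp: supp_def)
  then show "finite {j. f (if j mod m = k then vb j else 0) \<noteq> 0}"
    using W_fin[OF f] finite_subset by blast
qed

definition proj :: "nat \<Rightarrow> ('v \<Rightarrow> 'k) \<Rightarrow> ('v \<Rightarrow> 'k)" where
  "proj k f = f \<circ> Dm k"

lemma sm_proj: "sm (proj k)"
  unfolding proj_def[abs_def] by (rule sm_comp_glM[OF Dm_glM])

lemma proj_ad: "f \<in> Vd \<Longrightarrow> proj k f \<in> Vd" using sm_Vd[OF sm_proj] .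

lemma proj_vb: "f \<in> Vd \<Longrightarrow> proj k f (vb j) = (if j mod m = k then f (vb j) else 0)"
  by (simp add: proj_def Dm_def ad_zero_apply)

lemma proj_add: "proj k (f + g) = proj k f + proj k g" by (simp add: proj_def fun_eq_iff)
lemma proj_diff: "proj k (f - g) = proj k f - proj k g" by (simp add: proj_def fun_eq_iff)
lemma proj_scale: "proj k (fscale c f) = fscale c (proj k f)" by (simp add: proj_def fun_eq_iff)

lemma dact_Dm: "dact (Dm k) f = - proj k f" by (simp add: dact_eq proj_def)

lemma proj_proj: "f \<in> Vd \<Longrightarrow> proj l (proj k f) = (if l = k then proj k f else 0)"
  by (rule ad_ext) (auto simp: proj_ad proj_vb ad_zero)

lemma proj_e: "proj l (e k) = (if l = k then e k else 0)"
  by (rule ad_ext) (auto simp: proj_ad e_ad proj_vb e_vb ad_zero)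

lemma sum_proj: "f \<in> Vd \<Longrightarrow> (\<Sum>k<m. proj k f) = f" if "m > 0"
proof (rule ad_ext)
  assume f: "f \<in> Vd"
  show "(\<Sum>k<m. proj k f) \<in> Vd" by (rule ad_sum) (simp add: proj_ad f)
  fix n
  have "(\<Sum>k<m. proj k f) (vb n) = (\<Sum>k<m. if n mod m = k then f (vb n) else 0)"
    by (simp add: sum_fun_apply proj_vb f)
  also have "\<dots> = f (vb n)" using that by (simp add: sum.delta)
  finally show "(\<Sum>k<m. proj k f) (vb n) = f (vb n)" .
qed (use that in auto)

definition Psi :: "nat \<Rightarrow> 'v \<Rightarrow> 'v" where
  "Psi k = map_of (\<lambda>j. if j mod m = k then vb (j + m) - vb j else 0)"

lemma Psi_glM: "Psi k \<in> glM sV W"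
  unfolding Psi_def
proof (rule glM_of)
  fix f assume f: "f \<in> W"
  have fv: "f \<in> Vd" using f W_sub by blast
  have "{j. f (if j mod m = k then vb (j + m) - vb j else 0) \<noteq> 0} \<subseteq> supp f \<union> (\<lambda>n. n - m) ` supp f"
  proof
    fix j assume "j \<in> {j. f (if j mod m = k then vb (j + m) - vb j else 0) \<noteq> 0}"
    then have "f (vb (j + m)) \<noteq> 0 \<or> f (vb j) \<noteq> 0"
      by (auto simp: ad_diff_apply[OF fv] ad_zero_apply[OF fv] split: if_splits)
    then show "j \<in> supp f \<union> (\<lambda>n. n - m) ` supp f"
      by (auto simp: supp_def intro!: image_eqI[where x="j + m"])
  qed
  then show "finite {j. f (if j mod m = k then vb (j + m) - vb j else 0) \<noteq> 0}"
    using W_fin[OF f] finite_subset by blast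
qed

definition u :: "nat \<Rightarrow> ('v \<Rightarrow> 'k) \<Rightarrow> ('v \<Rightarrow> 'k)" where
  "u k = dact (Psi k)"

lemma sm_u: "sm (u k)" unfolding u_def by (rule sm_dact[OF Psi_glM])
lemma u_ad: "f \<in> Vd \<Longrightarrow> u k f \<in> Vd" using sm_Vd[OF sm_u] .

lemma u_vb: "f \<in> Vd \<Longrightarrow> u k f (vb j) = (if j mod m = k then f (vb j) - f (vb (j + m)) else 0)"
  by (simp add: u_def dact_def Psi_def ad_diff_apply ad_zero_apply)

lemma u_e: "u l (e k) = 0"
  by (rule ad_ext) (auto simp: u_ad e_ad u_vb e_vb ad_zero)

lemma proj_u: "f \<in> Vd \<Longrightarrow> proj l (u k f) = (if l = k then u k f else 0)"
  by (rule ad_ext) (auto simp: proj_ad u_ad u_vb proj_vb ad_zero)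

lemma u_proj: "f \<in> Vd \<Longrightarrow> u k (proj k f) = u k f"
  by (rule ad_ext) (auto simp: proj_ad u_ad u_vb proj_vb)

definition Phi :: "nat \<Rightarrow> (nat \<Rightarrow> 'k) \<Rightarrow> 'v \<Rightarrow> 'v" where
  "Phi i c = map_of (\<lambda>j. sV (c j) (vb (i + m * j)))"

lemma Phi_glM: assumes "m > 0" shows "Phi i c \<in> glM sV W"
  unfolding Phi_def
proof (rule glM_of)
  fix f assume f: "f \<in> W"
  have fv: "f \<in> Vd" using f W_sub by blast
  have "{j. f (sV (c j) (vb (i + m * j))) \<noteq> 0} \<subseteq> (\<lambda>n. (n - i) div m) ` supp f"
  proof
    fix j assume "j \<in> {j. f (sV (c j) (vb (i + m * j))) \<noteq> 0}"
    then have "f (vb (i + m * j)) \<noteq> 0" by (auto simp: ad_scale_apply[OF fv])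
    moreover have "j = ((i + m * j) - i) div m" using assms by simp
    ultimately show "j \<in> (\<lambda>n. (n - i) div m) ` supp f"
      unfolding supp_def by (intro image_eqI[where x="i + m * j"]) auto
  qed
  then show "finite {j. f (sV (c j) (vb (i + m * j))) \<noteq> 0}"
    using W_fin[OF f] finite_subset by blast
qed

lemma dact_Phi_e: assumes "i < m" "k < m"
  shows "dact (Phi i c) (e k) = (if k = i then fun_of (\<lambda>j. - c j) else 0)"
proof (rule ad_ext)
  show "dact (Phi i c) (e k) \<in> Vd"
    using sm_Vd[OF sm_dact[OF Phi_glM]] e_ad assms by auto
  show "(if k = i then fun_of (\<lambda>j. - c j) else 0) \<in> Vd" by (simp add: fun_of_ad ad_zero)
  fix n
  have "(i + m * n) mod m = i" using assms by simp
  then show "dact (Phi i c) (e k) (vb n) = (if k = i then fun_of (\<lambda>j. - c j) else 0) (vb n)"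
    by (auto simp: dact_def Phi_def ad_scale_apply[OF e_ad] e_vb)
qed

definition Cb :: "('v \<Rightarrow> 'k) set" where
  "Cb = (SOME C. C \<subseteq> W \<and> \<not> module.dependent fscale C \<and> module.span fscale C = W)"

lemma Cb: "Cb \<subseteq> W \<and> F.independent Cb \<and> F.span Cb = W"
proof -
  have "\<exists>C. C \<subseteq> W \<and> \<not> module.dependent fscale C \<and> module.span fscale C = W"
    using mp unfolding mackey_pair_def by blast
  then show ?thesis unfolding Cb_def by (rule someI_ex)
qed

definition mu' :: "nat \<Rightarrow> ('v \<Rightarrow> 'k) \<Rightarrow> 'k" where
  "mu' k = FK.construct (insert (e k) Cb) (\<lambda>x. if x = e k then 1 else 0)"

lemma indep_eCb: "k < m \<Longrightarrow> F.independent (insert (e k) Cb)"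
  using F.independent_insertI Cb e_notW by metis

lemma mu'_lin: "k < m \<Longrightarrow> Vector_Spaces.linear fscale (*) (mu' k)"
  unfolding mu'_def by (rule FK.linear_construct[OF indep_eCb])

lemma mu'_e: "k < m \<Longrightarrow> mu' k (e k) = 1"
  unfolding mu'_def by (simp add: FK.construct_basis[OF indep_eCb])

lemma mu'_W: assumes "k < m" "w \<in> W" shows "mu' k w = 0"
proof -
  have "w \<in> F.span Cb" using Cb assms(2) by blast
  then show ?thesis
  proof (rule FK.linear_eq_0_on_span[OF mu'_lin[OF assms(1)], rotated])
    fix x assume "x \<in> Cb"
    moreover have "x \<noteq> e k" using \<open>x \<in> Cb\<close> Cb e_notW[OF assms(1)] by blast
    ultimately show "mu' k x = 0" unfolding mu'_def
      by (simp add: FK.construct_basis[OF indep_eCb[OF assms(1)]])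
  qed
qed

definition mu :: "nat \<Rightarrow> ('v \<Rightarrow> 'k) \<Rightarrow> 'k" where
  "mu k f = mu' k (proj k f)"

lemma mu_add: "k < m \<Longrightarrow> mu k (f + g) = mu k f + mu k g"
  unfolding mu_def proj_add using linear_iff mu'_lin by metis
lemma mu_scale: "k < m \<Longrightarrow> mu k (fscale c f) = c * mu k f"
  unfolding mu_def proj_scale using linear_iff mu'_lin by metis
lemma mu_diff: "k < m \<Longrightarrow> mu k (f - g) = mu k f - mu k g"
  by (metis add_diff_cancel_right' diff_add_cancel mu_add)
lemma mu_W: "k < m \<Longrightarrow> w \<in> W \<Longrightarrow> mu k w = 0"
  unfolding mu_def using mu'_W sm_W[OF sm_proj] by blast
lemma mu_e: "k < m \<Longrightarrow> mu k (e l) = (if l = k then 1 else 0)"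
  unfolding mu_def proj_e using mu'_e mu'_W W_zero by auto
lemma mu_proj: "k < m \<Longrightarrow> f \<in> Vd \<Longrightarrow> mu k (proj k f) = mu k f"
  unfolding mu_def by (simp add: proj_proj)

definition q :: "nat \<Rightarrow> ('v \<Rightarrow> 'k) \<Rightarrow> ('v \<Rightarrow> 'k)" where
  "q k f = fscale (mu k f) (e k)"

lemma sm_q: assumes "k < m" shows "sm (q k)"
proof (rule smI)
  show "q k f \<in> Vd" for f unfolding q_def by (rule ad_scale[OF e_ad])
  show "q k (f + g) = q k f + q k g" for f g
    unfolding q_def by (simp add: mu_add[OF assms] fun_eq_iff distrib_right)
  show "q k (fscale c f) = fscale c (q k f)" for c f
    unfolding q_def by (simp add: mu_scale[OF assms] fun_eq_iff)
  show "q k w \<in> W" if "w \<in> W" for w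
    unfolding q_def using mu_W[OF assms that] W_zero by (simp add: fscale_def zero_fun_def)
qed

lemma q_proj: "k < m \<Longrightarrow> f \<in> Vd \<Longrightarrow> q k (proj k f) = q k f"
  unfolding q_def by (simp add: mu_proj)

definition H :: "nat \<Rightarrow> ('v \<Rightarrow> 'k) \<Rightarrow> ('v \<Rightarrow> 'k)" where
  "H k g = fun_of (\<lambda>j. if j mod m = k then (\<Sum>l\<in>{l. l < j \<and> l mod m = k}. g (vb l)) else 0)"

lemma H_ad: "H k g \<in> Vd" unfolding H_def by (rule fun_of_ad)

lemma H_vb: "H k g (vb j) = (if j mod m = k then (\<Sum>l\<in>{l. l < j \<and> l mod m = k}. g (vb l)) else 0)"
  unfolding H_def by simp

lemma H_add: "H k (f + g) = H k f + H k g"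
  by (rule ad_ext) (auto simp: H_ad ad_add H_vb sum.distrib)

lemma H_scale: "H k (fscale c f) = fscale c (H k f)"
  by (rule ad_ext) (auto simp: H_ad ad_scale H_vb sum_distrib_left)

lemma H_W:
  assumes w: "w \<in> W"
  shows "H k w - fscale (\<Sum>l\<in>{l \<in> supp w. l mod m = k}. w (vb l)) (e k) \<in> W"
proof -
  let ?c = "\<Sum>l\<in>{l \<in> supp w. l mod m = k}. w (vb l)"
  have fin: "finite (supp w)" by (rule W_fin[OF w])
  obtain N where N: "supp w \<subseteq> {..<N}"
    using fin by (meson finite_nat_iff_bounded subset_eq lessThan_iff)
  show ?thesis
  proof (rule W_char)
    show "H k w - fscale ?c (e k) \<in> Vd" by (intro ad_diff H_ad ad_scale e_ad)
    have "supp (H k w - fscale ?c (e k)) \<subseteq> {..<N}"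
    proof
      fix j assume j: "j \<in> supp (H k w - fscale ?c (e k))"
      show "j \<in> {..<N}"
      proof (rule ccontr)
        assume "j \<notin> {..<N}"
        then have jN: "N \<le> j" by simp
        have "(\<Sum>l\<in>{l. l < j \<and> l mod m = k}. w (vb l)) = (\<Sum>l\<in>{l. l < j \<and> l mod m = k} \<inter> supp w. w (vb l))"
          by (rule sum.mono_neutral_right) (auto simp: supp_def)
        also have "{l. l < j \<and> l mod m = k} \<inter> supp w = {l \<in> supp w. l mod m = k}"
          using N jN by auto
        finally have "(\<Sum>l\<in>{l. l < j \<and> l mod m = k}. w (vb l)) = ?c" .
        then have "(H k w - fscale ?c (e k)) (vb j) = 0" by (simp add: H_vb e_vb)
        with j show False by (simp add: supp_def)
      qed
    qed
    then show "finite (supp (H k w - fscale ?c (e k)))" using finite_subset by blast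
  qed
qed

definition s :: "nat \<Rightarrow> ('v \<Rightarrow> 'k) \<Rightarrow> ('v \<Rightarrow> 'k)" where
  "s k g = fscale (mu k (H k g)) (e k) - H k g"

lemma sm_s: assumes k: "k < m" shows "sm (s k)"
proof (rule smI)
  show "s k f \<in> Vd" for f unfolding s_def by (intro ad_diff ad_scale e_ad H_ad)
  show "s k (f + g) = s k f + s k g" for f g
    unfolding s_def H_add by (simp add: mu_add[OF k] fun_eq_iff algebra_simps)
  show "s k (fscale c f) = fscale c (s k f)" for c f
    unfolding s_def H_scale by (simp add: mu_scale[OF k] fun_eq_iff algebra_simps)
  show "s k w \<in> W" if w: "w \<in> W" for w
  proof -
    define c where "c = (\<Sum>l\<in>{l \<in> supp w. l mod m = k}. w (vb l))"
    define w' where "w' = H k w - fscale c (e k)"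
    have w': "w' \<in> W" unfolding w'_def c_def by (rule H_W[OF w])
    have Hw: "H k w = w' + fscale c (e k)" by (simp add: w'_def)
    have "mu k (H k w) = c" unfolding Hw by (simp add: mu_add[OF k] mu_scale[OF k] mu_W[OF k w'] mu_e[OF k])
    then have "s k w = - w'" unfolding s_def by (simp add: Hw fun_eq_iff)
    then show ?thesis using W_neg[OF w'] by simp
  qed
qed

lemma telescope_blk:
  fixes g :: "nat \<Rightarrow> 'k"
  assumes k: "k < m" and jk: "j mod m = k"
  shows "(\<Sum>l\<in>{l. l < j \<and> l mod m = k}. g l - g (l + m)) = g k - g j"
proof -
  define t where "t = j div m"
  have j: "j = k + m * t" using mod_mult_div_eq[of j m] jk unfolding t_def by simp
  have set: "{l. l < j \<and> l mod m = k} = (\<lambda>r. k + m * r) ` {..<t}"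
  proof
    show "{l. l < j \<and> l mod m = k} \<subseteq> (\<lambda>r. k + m * r) ` {..<t}"
    proof
      fix l assume l: "l \<in> {l. l < j \<and> l mod m = k}"
      then have "l = k + m * (l div m)" using mod_mult_div_eq[of l m] by simp
      moreover have "l div m < t"
      proof (rule ccontr)
        assume "\<not> l div m < t"
        then have "m * t \<le> m * (l div m)" by simp
        then have "j \<le> l" using j \<open>l = k + m * (l div m)\<close> by linarith
        with l show False by simp
      qed
      ultimately show "l \<in> (\<lambda>r. k + m * r) ` {..<t}" by blast
    qed
  next
    show "(\<lambda>r. k + m * r) ` {..<t} \<subseteq> {l. l < j \<and> l mod m = k}"
    proof
      fix l assume "l \<in> (\<lambda>r. k + m * r) ` {..<t}"
      then obtain r where r: "r < t" "l = k + m * r" by blast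
      have "m * r < m * t" using r(1) k by simp
      then show "l \<in> {l. l < j \<and> l mod m = k}" using r k j by simp
    qed
  qed
  have inj: "inj_on (\<lambda>r. k + m * r) {..<t}" using k by (auto simp: inj_on_def)
  have "(\<Sum>l\<in>{l. l < j \<and> l mod m = k}. g l - g (l + m)) = (\<Sum>r<t. g (k + m * r) - g (k + m * Suc r))"
    unfolding set sum.reindex[OF inj] comp_def by (simp add: algebra_simps)
  also have "\<dots> = g k - g (k + m * t)"
    using sum_lessThan_telescope'[of "\<lambda>r. g (k + m * r)" t] by simp
  finally show ?thesis using j by simp
qed

lemma H_u:
  assumes k: "k < m" and f: "f \<in> Vd"
  shows "H k (u k f) = fscale (f (vb k)) (e k) - proj k f"
proof (rule ad_ext)
  show "H k (u k f) \<in> Vd" by (rule H_ad)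
  show "fscale (f (vb k)) (e k) - proj k f \<in> Vd" by (intro ad_diff ad_scale e_ad proj_ad f)
  fix j
  show "H k (u k f) (vb j) = (fscale (f (vb k)) (e k) - proj k f) (vb j)"
  proof (cases "j mod m = k")
    case True
    have "H k (u k f) (vb j) = (\<Sum>l\<in>{l. l < j \<and> l mod m = k}. f (vb l) - f (vb (l + m)))"
      unfolding H_vb using True by (simp add: u_vb[OF f])
    also have "\<dots> = f (vb k) - f (vb j)"
      by (rule telescope_blk[OF k True, of "\<lambda>l. f (vb l)"])
    finally show ?thesis using True by (simp add: e_vb proj_vb[OF f])
  next
    case False
    then show ?thesis by (simp add: H_vb e_vb proj_vb[OF f])
  qed
qed

lemma s_u:
  assumes k: "k < m" and f: "f \<in> Vd"
  shows "s k (u k f) = proj k f - q k f"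
proof -
  have *: "mu k (fscale (f (vb k)) (e k) - proj k f) = f (vb k) - mu k f"
    by (simp add: mu_diff[OF k] mu_scale[OF k] mu_e[OF k] mu_proj[OF k f])
  show ?thesis unfolding s_def q_def
    by (simp only: H_u[OF k f] *) (simp add: fun_eq_iff algebra_simps)
qed

end

context ctx begin

interpretation TT: vector_space_pair sT sT by unfold_locales

lemma MS_cong:
  assumes "good L" "good L'" "\<And>i f. i < m \<Longrightarrow> f \<in> Vd \<Longrightarrow> L i f = L' i f"
  shows "MS L = MS L'"
proof (rule linT_eq)
  show "Vector_Spaces.linear sT sT (MS L)" "Vector_Spaces.linear sT sT (MS L')" using MS_lin assms by blast+
  fix fs assume fs: "fs \<in> Args"
  have "appL L fs = appL L' fs"
    by (rule nth_equalityI) (use fs assms(3) in \<open>auto simp: appL_nth args_iff\<close>)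
  then show "MS L (\<iota> fs) = MS L' (\<iota> fs)" using MS_gen assms fs by simp
qed

lemma MS_zero_slot:
  assumes L: "good L" and i: "i < m" and w: "\<And>f. f \<in> Vd \<Longrightarrow> L i f \<in> W"
  shows "MS L = (\<lambda>_. 0)"
proof -
  have s: "sm (L i)" using L i good_def by blast
  have "MS (L(i := L i)) = (\<lambda>_. 0)" by (rule MS_slot_W[OF L i s w])
  then show ?thesis by simp
qed

lemma iota_diff: "fs \<in> Args \<Longrightarrow> i < m \<Longrightarrow> g \<in> Vd \<Longrightarrow> h \<in> Vd \<Longrightarrow>
   \<iota> (fs[i := g - h]) = \<iota> (fs[i := g]) - \<iota> (fs[i := h])"
  using iota_add[of fs i "g - h" h] ad_diff by (simp add: eq_diff_eq)

lemma MS_slot_diff: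
  assumes L: "good L" and i: "i < m" and a: "sm a" and b: "sm b" and ab: "sm (\<lambda>f. a f - b f)"
  shows "MS (L(i := (\<lambda>f. a f - b f))) t = MS (L(i := a)) t - MS (L(i := b)) t"
proof -
  have "MS (L(i := (\<lambda>f. a f - b f))) = (\<lambda>t. MS (L(i := a)) t - MS (L(i := b)) t)"
  proof (rule linT_eq)
    show "Vector_Spaces.linear sT sT (MS (L(i := (\<lambda>f. a f - b f))))"
      using MS_lin good_upd[OF L ab] by blast
    show "Vector_Spaces.linear sT sT (\<lambda>t. MS (L(i := a)) t - MS (L(i := b)) t)"
      by (rule TT.linear_compose_sub) (use MS_lin good_upd[OF L] a b in blast)+
    fix fs assume fs: "fs \<in> Args"
    have pa: "appL L fs \<in> Args" by (rule appL_args[OF L fs])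
    have fi: "fs ! i \<in> Vd" using fs i args_iff by blast
    show "MS (L(i := (\<lambda>f. a f - b f))) (\<iota> fs) = MS (L(i := a)) (\<iota> fs) - MS (L(i := b)) (\<iota> fs)"
      using MS_gen[OF good_upd[OF L ab] fs] MS_gen[OF good_upd[OF L a] fs] MS_gen[OF good_upd[OF L b] fs] i
        iota_diff[OF pa i sm_Vd[OF a fi] sm_Vd[OF b fi]]
      by (simp add: appL_upd2)
  qed
  then show ?thesis by simp
qed

lemma sm_sum:
  assumes "finite K" "\<And>k. k \<in> K \<Longrightarrow> sm (l k)"
  shows "sm (\<lambda>f. \<Sum>k\<in>K. l k f)"
proof (rule smI)
  show "(\<Sum>k\<in>K. l k f) \<in> Vd" if "f \<in> Vd" for f by (rule ad_sum) (use assms sm_Vd that in blast)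
  show "(\<Sum>k\<in>K. l k (f + g)) = (\<Sum>k\<in>K. l k f) + (\<Sum>k\<in>K. l k g)" if "f \<in> Vd" "g \<in> Vd" for f g
  proof -
    have "(\<Sum>k\<in>K. l k (f + g)) = (\<Sum>k\<in>K. l k f + l k g)"
      by (rule sum.cong[OF refl], rule sm_add) (use assms that in auto)
    also have "\<dots> = (\<Sum>k\<in>K. l k f) + (\<Sum>k\<in>K. l k g)" by (rule sum.distrib)
    finally show ?thesis .
  qed
  show "(\<Sum>k\<in>K. l k (fscale c f)) = fscale c (\<Sum>k\<in>K. l k f)" if "f \<in> Vd" for c f
    using assms that by (simp add: sm_scale fun_eq_iff sum_fun_apply sum_distrib_left)
  show "(\<Sum>k\<in>K. l k w) \<in> W" if "w \<in> W" for w by (rule W_sum) (use assms sm_W that in blast)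
qed

definition xl :: "('v \<Rightarrow> 'k) list" where "xl = map e [0..<m]"
definition x0 :: 't where "x0 = \<iota> xl"

lemma xl_len[simp]: "length xl = m" by (simp add: xl_def)
lemma xl_nth: "i < m \<Longrightarrow> xl ! i = e i" by (simp add: xl_def)
lemma xl_args: "xl \<in> Args" by (simp add: args_iff xl_nth e_ad)

lemma Aop_Dm_x0: assumes k: "k < m" shows "Aop (Dm k) x0 = - x0"
proof -
  have "Aop (Dm k) x0 = (\<Sum>i<m. \<iota> (xl[i := dact (Dm k) (xl ! i)]))"
    unfolding x0_def by (rule Aop_gen[OF Dm_glM xl_args])
  also have "\<dots> = (\<Sum>i<m. if i = k then - x0 else 0)"
  proof (rule sum.cong[OF refl])
    fix i assume i: "i \<in> {..<m}"
    show "\<iota> (xl[i := dact (Dm k) (xl ! i)]) = (if i = k then - x0 else 0)"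
    proof (cases "i = k")
      case True
      have "dact (Dm k) (xl ! i) = fscale (-1) (e k)"
        using True i by (simp add: xl_nth dact_Dm proj_e fun_eq_iff)
      moreover have "\<iota> (xl[k := fscale (-1) (e k)]) = - x0"
      proof -
        have "xl[k := e k] = xl" using xl_nth[OF k] by (metis list_update_id)
        then show ?thesis using iota_scale[OF xl_args k e_ad, of "-1" k] by (simp add: x0_def)
      qed
      ultimately show ?thesis using True by simp
    next
      case False
      have "dact (Dm k) (xl ! i) = 0" using False i by (simp add: xl_nth dact_Dm proj_e)
      then show ?thesis using False iota_W[OF args_upd[OF xl_args ad_zero], of i] i W_zero by simp
    qed
  qed
  also have "\<dots> = - x0" using k by (simp add: sum.delta)
  finally show ?thesis .
qed

lemma Aop_Psi_x0: "Aop (Psi k) x0 = 0"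
proof -
  have "Aop (Psi k) x0 = (\<Sum>i<m. \<iota> (xl[i := dact (Psi k) (xl ! i)]))"
    unfolding x0_def by (rule Aop_gen[OF Psi_glM xl_args])
  also have "\<dots> = (\<Sum>i<m. 0)"
  proof (rule sum.cong[OF refl])
    fix i assume i: "i \<in> {..<m}"
    have "dact (Psi k) (xl ! i) = 0" using i by (simp add: xl_nth u_e[unfolded u_def])
    then show "\<iota> (xl[i := dact (Psi k) (xl ! i)]) = 0"
      using iota_W[OF args_upd[OF xl_args ad_zero], of i] i W_zero by simp
  qed
  finally show ?thesis by simp
qed

lemma cyclic:
  assumes D: "Vector_Spaces.linear sT sT D"
    and comm: "\<And>\<phi>. \<phi> \<in> glM sV W \<Longrightarrow> D \<circ> Aop \<phi> = Aop \<phi> \<circ> D"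
    and D0: "D x0 = 0"
  shows "D = (\<lambda>_. 0)"
proof -
  interpret D: linear sT sT D by fact
  have main: "r \<le> m \<Longrightarrow> fs \<in> Args \<Longrightarrow> (\<forall>i. r \<le> i \<and> i < m \<longrightarrow> fs ! i = e i) \<Longrightarrow> D (\<iota> fs) = 0" for r fs
  proof (induct r arbitrary: fs)
    case 0
    have "fs = xl" by (rule nth_equalityI) (use 0 in \<open>auto simp: args_iff xl_nth\<close>)
    then show ?case using D0 x0_def by simp
  next
    case (Suc r)
    have r: "r < m" using Suc.prems(1) by simp
    have l: "length fs = m" using Suc.prems(2) args_iff by blast
    define g where "g = fs ! r"
    have g: "g \<in> Vd" using Suc.prems(2) r args_iff g_def by blast
    define gs where "gs = fs[r := e r]"
    have gs: "gs \<in> Args" unfolding gs_def by (rule args_upd[OF Suc.prems(2) e_ad])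
    have gsl: "length gs = m" using gs args_iff by blast
    have gsi: "gs ! i = e i" if "r \<le> i" "i < m" for i
      using Suc.prems(3) that l by (cases "i = r") (auto simp: gs_def nth_list_update)
    define c where "c j = - g (vb j)" for j
    define \<phi> where "\<phi> = Phi r c"
    have m0: "m > 0" using r by simp
    have phi: "\<phi> \<in> glM sV W" unfolding \<phi>_def by (rule Phi_glM[OF m0])
    have dphi: "dact \<phi> (e i) = (if i = r then g else 0)" if "i < m" for i
      using dact_Phi_e[OF r that, of c] ad_fun_of[OF g, symmetric] unfolding \<phi>_def c_def by simp
    have dv: "dact \<phi> (gs ! i) \<in> Vd" if "i < m" for i
      using sm_Vd[OF sm_dact[OF phi]] gs that args_iff by blast
    have terms: "D (\<iota> (gs[i := dact \<phi> (gs ! i)])) = (if i = r then D (\<iota> fs) else 0)" if i: "i < m" for i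
    proof (cases "i < r")
      case True
      show ?thesis
      proof -
        have "D (\<iota> (gs[i := dact \<phi> (gs ! i)])) = 0"
        proof (rule Suc.hyps)
          show "r \<le> m" using r by simp
          show "gs[i := dact \<phi> (gs ! i)] \<in> Args" by (rule args_upd[OF gs dv[OF i]])
          show "\<forall>j. r \<le> j \<and> j < m \<longrightarrow> gs[i := dact \<phi> (gs ! i)] ! j = e j"
            using True gsi by auto
        qed
        then show ?thesis using True by simp
      qed
    next
      case False
      show ?thesis
      proof (cases "i = r")
        case True
        have "gs[i := dact \<phi> (gs ! i)] = fs"
          using True gsi[of r] r dphi[OF r] l unfolding gs_def g_def by simp
        then show ?thesis using True by simp
      next
        case ne: False
        then have ir: "r < i" using False by simp
        have "dact \<phi> (gs ! i) = 0" using gsi[of i] ir i dphi[OF i] ne by simp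
        then have "\<iota> (gs[i := dact \<phi> (gs ! i)]) = 0"
          using iota_W[OF args_upd[OF gs ad_zero] ] i W_zero gsl by simp
        then show ?thesis using ne D.zero by simp
      qed
    qed
    have "D (Aop \<phi> (\<iota> gs)) = Aop \<phi> (D (\<iota> gs))" using comm[OF phi] by (metis comp_apply)
    also have "D (\<iota> gs) = 0"
      by (rule Suc.hyps) (use r gs gsi in auto)
    also have "Aop \<phi> 0 = 0" using Aop_lin[OF phi] by (simp add: TT.linear_0)
    finally have "D (Aop \<phi> (\<iota> gs)) = 0" .
    moreover have "D (Aop \<phi> (\<iota> gs)) = (\<Sum>i<m. D (\<iota> (gs[i := dact \<phi> (gs ! i)])))"
      by (simp add: Aop_gen[OF phi gs] D.sum)
    moreover have "\<dots> = (\<Sum>i<m. if i = r then D (\<iota> fs) else 0)"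
      by (rule sum.cong) (use terms in auto)
    moreover have "\<dots> = D (\<iota> fs)" using r by (simp add: sum.delta)
    ultimately show ?case by simp
  qed
  show ?thesis
  proof (rule linT_eq[OF D TT.linear_zero])
    fix fs assume "fs \<in> Args"
    moreover have "\<forall>i. m \<le> i \<and> i < m \<longrightarrow> fs ! i = e i" by auto
    ultimately show "D (\<iota> fs) = 0" using main[of m fs] by blast
  qed
qed

end

lemma sum_PiE_insert:
  assumes "x \<notin> S"
  shows "(\<Sum>g\<in>PiE (insert x S) T. h g) = (\<Sum>y\<in>T x. \<Sum>g\<in>PiE S T. h (g(x := y)))"
proof -
  have "(\<Sum>g\<in>PiE (insert x S) T. h g) = (\<Sum>(y,g)\<in>T x \<times> PiE S T. h (g(x := y)))"
    by (rule sum.reindex_bij_witness[of _ "\<lambda>(y,g). g(x := y)" "\<lambda>g. (g x, g(x := undefined))"])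
       (use assms in \<open>auto simp: PiE_def extensional_def\<close>)
  also have "\<dots> = (\<Sum>y\<in>T x. \<Sum>g\<in>PiE S T. h (g(x := y)))"
    by (rule sum.cartesian_product[symmetric])
  finally show ?thesis .
qed

context ctx begin

interpretation TT: vector_space_pair sT sT by unfold_locales

abbreviation "PiM \<equiv> PiE {..<m} (\<lambda>_. {..<m})"

lemma good_proj: "good (\<lambda>i. proj (\<beta> i))" by (simp add: good_def sm_proj)

lemma good_projR: "good (\<lambda>i. if i < R then proj (\<beta> i) else id)"
  by (simp add: good_def sm_proj sm_id)

lemma expand_R:
  "R \<le> m \<Longrightarrow> (\<Sum>\<beta>\<in>PiE {..<R} (\<lambda>_. {..<m}). MS (\<lambda>i. if i < R then proj (\<beta> i) else id) t) = t"
proof (induct R)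
  case 0
  have "(\<lambda>i::nat. if i < 0 then proj (undefined i) else id) = (\<lambda>_. id)" by auto
  then show ?case by (simp add: MS_id MS_id[unfolded id_def])
next
  case (Suc R)
  have R: "R < m" using Suc.prems by simp
  then have m0: "m > 0" by simp
  let ?L = "\<lambda>\<beta> i. if i < R then proj (\<beta> i) else id"
  have "(\<Sum>\<beta>\<in>PiE {..<Suc R} (\<lambda>_. {..<m}). MS (\<lambda>i. if i < Suc R then proj (\<beta> i) else id) t)
      = (\<Sum>k<m. \<Sum>\<beta>\<in>PiE {..<R} (\<lambda>_. {..<m}). MS (\<lambda>i. if i < Suc R then proj ((\<beta>(R := k)) i) else id) t)"
    unfolding lessThan_Suc by (rule sum_PiE_insert) simp
  also have "\<dots> = (\<Sum>\<beta>\<in>PiE {..<R} (\<lambda>_. {..<m}). \<Sum>k<m. MS ((?L \<beta>)(R := proj k)) t)"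
    by (subst sum.swap) (intro sum.cong refl arg_cong2[where f=MS] ext, auto)
  also have "\<dots> = (\<Sum>\<beta>\<in>PiE {..<R} (\<lambda>_. {..<m}). MS (?L \<beta>) t)"
  proof (rule sum.cong[OF refl])
    fix \<beta>
    have "(\<Sum>k<m. MS ((?L \<beta>)(R := proj k)) t) = MS ((?L \<beta>)(R := (\<lambda>f. \<Sum>k<m. proj k f))) t"
      using MS_slot_sum[OF good_projR[of R \<beta>] R, where K="{..<m}" and l="\<lambda>k. proj k"] sm_proj sm_sum[of "{..<m}" "\<lambda>k. proj k"]
      by simp
    also have "MS ((?L \<beta>)(R := (\<lambda>f. \<Sum>k<m. proj k f))) = MS (?L \<beta>)"
      by (rule MS_cong) (auto simp: good_upd[OF good_projR] sm_sum sm_proj good_projR sum_proj[OF m0])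
    finally show "(\<Sum>k<m. MS ((?L \<beta>)(R := proj k)) t) = MS (?L \<beta>) t" .
  qed
  also have "\<dots> = t" using Suc.hyps R by simp
  finally show ?case .
qed

lemma expand: "(\<Sum>\<beta>\<in>PiM. MS (\<lambda>i. proj (\<beta> i)) t) = t"
proof -
  have "MS (\<lambda>i. proj (\<beta> i)) = MS (\<lambda>i. if i < m then proj (\<beta> i) else id)" for \<beta>
    by (rule MS_cong) (auto simp: good_proj good_projR)
  then show ?thesis using expand_R[of m t] by simp
qed

lemma not_inj_miss:
  assumes "\<beta> \<in> PiM" "\<not> inj_on \<beta> {..<m}"
  shows "\<exists>k<m. \<forall>i<m. \<beta> i \<noteq> k"
proof (rule ccontr)
  assume "\<not> (\<exists>k<m. \<forall>i<m. \<beta> i \<noteq> k)"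
  then have "{..<m} \<subseteq> \<beta> ` {..<m}" by auto
  moreover have "\<beta> ` {..<m} \<subseteq> {..<m}" using assms(1) by auto
  ultimately have "\<beta> ` {..<m} = {..<m}" by blast
  then have "inj_on \<beta> {..<m}" using inj_on_iff_eq_card[of "{..<m}" \<beta>] by simp
  with assms(2) show False by blast
qed

lemma proj_neg: "proj k (- f) = - proj k f" by (simp add: proj_def fun_eq_iff)

lemma kill:
  assumes y: "\<And>k. k < m \<Longrightarrow> Aop (Dm k) y = - y"
    and b: "\<beta> \<in> PiM" "\<not> inj_on \<beta> {..<m}"
  shows "MS (\<lambda>i. proj (\<beta> i)) y = 0"
proof -
  obtain k where k: "k < m" "\<And>i. i < m \<Longrightarrow> \<beta> i \<noteq> k" using not_inj_miss[OF b] by blast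
  interpret M: linear sT sT "MS (\<lambda>i. proj (\<beta> i))" using MS_lin[OF good_proj] .
  have "MS (\<lambda>i. proj (\<beta> i)) (Aop (Dm k) y) = (\<Sum>i<m. MS (\<lambda>i. proj (\<beta> i)) (MS (slot i (dact (Dm k))) y))"
    by (simp add: Aop_def M.sum)
  also have "\<dots> = (\<Sum>i<m. 0)"
  proof (rule sum.cong[OF refl])
    fix i assume i: "i \<in> {..<m}"
    have g: "good (slot i (dact (Dm k)))" by (rule good_slot[OF sm_dact[OF Dm_glM]])
    have "MS (\<lambda>l. proj (\<beta> l) \<circ> slot i (dact (Dm k)) l) = (\<lambda>_. 0)"
    proof (rule MS_zero_slot[of _ i])
      show "good (\<lambda>l. proj (\<beta> l) \<circ> slot i (dact (Dm k)) l)" by (rule good_comp[OF good_proj g])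
      show "i < m" using i by simp
      fix f assume f: "f \<in> Vd"
      have "(proj (\<beta> i) \<circ> slot i (dact (Dm k)) i) f = 0"
        using k(2)[of i] i by (simp add: slot_def dact_Dm proj_neg proj_proj[OF f])
      then show "(proj (\<beta> i) \<circ> slot i (dact (Dm k)) i) f \<in> W" using W_zero by simp
    qed
    then show "MS (\<lambda>i. proj (\<beta> i)) (MS (slot i (dact (Dm k))) y) = 0"
      using MS_comp_apply[OF good_proj g] by simp
  qed
  finally have "MS (\<lambda>i. proj (\<beta> i)) (Aop (Dm k) y) = 0" by simp
  then show ?thesis using y[OF k(1)] by (simp add: M.neg)
qed

lemma sm_diff: "sm a \<Longrightarrow> sm b \<Longrightarrow> sm (\<lambda>f. a f - b f)"
  by (rule smI) (auto simp: sm_Vd sm_add sm_scale sm_W ad_diff W_diff fun_eq_iff algebra_simps)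

lemma pin_slot:
  assumes y: "\<And>k. k < m \<Longrightarrow> Aop (Psi k) y = 0"
    and b: "\<beta> \<in> PiM" "inj_on \<beta> {..<m}" and i: "i < m"
  shows "MS (\<lambda>i. proj (\<beta> i)) y = MS (slot i (q (\<beta> i))) (MS (\<lambda>i. proj (\<beta> i)) y)"
proof -
  define k where "k = \<beta> i"
  have k: "k < m" using b(1) i k_def by auto
  let ?Lb = "\<lambda>i. proj (\<beta> i)"
  let ?z = "MS ?Lb y"
  interpret M: linear sT sT "MS ?Lb" using MS_lin[OF good_proj] .
  have gu: "good (slot i (u k))" by (rule good_slot[OF sm_u])
  have gLu: "good (?Lb(i := u k))" by (rule good_upd[OF good_proj sm_u])
  have A: "MS ?Lb (Aop (Psi k) t) = MS (slot i (u k)) (MS ?Lb t)" for t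
  proof -
    have "MS ?Lb (Aop (Psi k) t) = (\<Sum>j<m. MS ?Lb (MS (slot j (u k)) t))"
      by (simp add: Aop_def M.sum u_def)
    also have "\<dots> = (\<Sum>j<m. MS (\<lambda>l. proj (\<beta> l) \<circ> slot j (u k) l) t)"
      by (rule sum.cong[OF refl], rule MS_comp_apply[OF good_proj good_slot[OF sm_u]])
    also have "\<dots> = (\<Sum>j<m. if j = i then MS (?Lb(i := u k)) t else 0)"
    proof (rule sum.cong[OF refl])
      fix j assume j: "j \<in> {..<m}"
      have gj: "good (\<lambda>l. proj (\<beta> l) \<circ> slot j (u k) l)" by (rule good_comp[OF good_proj good_slot[OF sm_u]])
      show "MS (\<lambda>l. proj (\<beta> l) \<circ> slot j (u k) l) t = (if j = i then MS (?Lb(i := u k)) t else 0)"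
      proof (cases "j = i")
        case True
        have "MS (\<lambda>l. proj (\<beta> l) \<circ> slot j (u k) l) = MS (?Lb(i := u k))"
          by (rule MS_cong[OF gj gLu]) (auto simp: True slot_def proj_u k_def)
        then show ?thesis using True by simp
      next
        case False
        have "\<beta> j \<noteq> k" using b(2) False i j unfolding k_def inj_on_def by auto
        have "MS (\<lambda>l. proj (\<beta> l) \<circ> slot j (u k) l) = (\<lambda>_. 0)"
        proof (rule MS_zero_slot[OF gj])
          show "j < m" using j by simp
          fix f assume f: "f \<in> Vd"
          show "(proj (\<beta> j) \<circ> slot j (u k) j) f \<in> W"
            using \<open>\<beta> j \<noteq> k\<close> W_zero by (simp add: slot_def proj_u[OF f])
        qed
        then show ?thesis using False by simp
      qed
    qed
    also have "\<dots> = MS (?Lb(i := u k)) t" using i by (simp add: sum.delta)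
    also have "MS (?Lb(i := u k)) = MS (\<lambda>l. slot i (u k) l \<circ> proj (\<beta> l))"
      by (rule MS_cong[OF gLu good_comp[OF gu good_proj]])
         (auto simp: slot_def u_proj k_def)
    also have "\<dots> t = MS (slot i (u k)) (MS ?Lb t)" by (rule MS_comp_apply[OF gu good_proj, symmetric])
    finally show ?thesis .
  qed
  have u0: "MS (slot i (u k)) ?z = 0" using A[of y] y[OF k] by (simp add: M.zero)
  have gs: "good (slot i (s k))" by (rule good_slot[OF sm_s[OF k]])
  have sdiff: "sm (\<lambda>f. proj k f - q k f)" by (rule sm_diff[OF sm_proj sm_q[OF k]])
  have "0 = MS (slot i (s k)) (MS (slot i (u k)) ?z)"
    using u0 MS_lin[OF gs] by (simp add: TT.linear_0)
  also have "\<dots> = MS (\<lambda>l. slot i (s k) l \<circ> slot i (u k) l) ?z" by (rule MS_comp_apply[OF gs gu])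
  also have "MS (\<lambda>l. slot i (s k) l \<circ> slot i (u k) l) = MS ((\<lambda>_. id)(i := (\<lambda>f. proj k f - q k f)))"
    by (rule MS_cong[OF good_comp[OF gs gu] good_upd[OF good_id sdiff]])
       (auto simp: slot_def s_u[OF k])
  also have "\<dots> ?z = MS ((\<lambda>_. id)(i := proj k)) ?z - MS ((\<lambda>_. id)(i := q k)) ?z"
    by (rule MS_slot_diff[OF good_id i sm_proj sm_q[OF k] sdiff])
  also have "MS ((\<lambda>_. id)(i := proj k)) ?z = ?z"
  proof -
    have "MS ((\<lambda>_. id)(i := proj k)) ?z = MS (\<lambda>l. ((\<lambda>_. id)(i := proj k)) l \<circ> proj (\<beta> l)) y"
      by (rule MS_comp_apply[OF good_upd[OF good_id sm_proj] good_proj])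
    also have "MS (\<lambda>l. ((\<lambda>_. id)(i := proj k)) l \<circ> proj (\<beta> l)) = MS ?Lb"
      by (rule MS_cong[OF good_comp[OF good_upd[OF good_id sm_proj] good_proj] good_proj])
         (auto simp: proj_proj k_def)
    finally show ?thesis .
  qed
  finally have "0 = ?z - MS ((\<lambda>_. id)(i := q k)) ?z" .
  then show ?thesis by (simp add: slot_def k_def)
qed

end

context ctx begin

interpretation TT: vector_space_pair sT sT by unfold_locales

definition prodform :: "(nat \<Rightarrow> nat) \<Rightarrow> ('v \<Rightarrow> 'k) list \<Rightarrow> 'k" where
  "prodform \<beta> fs = (\<Prod>l<m. mu (\<beta> l) (fs ! l))"

lemma prodform_upd:
  assumes "i < m" "length fs = m"
  shows "prodform \<beta> (fs[i := x]) = mu (\<beta> i) x * (\<Prod>l\<in>{..<m} - {i}. mu (\<beta> l) (fs ! l))"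
proof -
  have "prodform \<beta> (fs[i := x]) = mu (\<beta> i) ((fs[i := x]) ! i) * (\<Prod>l\<in>{..<m} - {i}. mu (\<beta> l) ((fs[i := x]) ! l))"
    unfolding prodform_def by (rule prod.remove) (use assms in auto)
  also have "(\<Prod>l\<in>{..<m} - {i}. mu (\<beta> l) ((fs[i := x]) ! l)) = (\<Prod>l\<in>{..<m} - {i}. mu (\<beta> l) (fs ! l))"
    by (rule prod.cong) auto
  finally show ?thesis using assms by simp
qed

lemma qml_prodform:
  assumes b: "\<And>l. l < m \<Longrightarrow> \<beta> l < m"
  shows "quot_multilinear sV W (*) m (prodform \<beta>)"
  unfolding quot_multilinear_def
proof (intro conjI ballI allI impI)
  fix fs i g h c assume a: "fs \<in> Args" "i < m" "g \<in> Vd" "h \<in> Vd"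
  have l: "length fs = m" using a(1) args_iff by blast
  show "prodform \<beta> (fs[i := g + h]) = prodform \<beta> (fs[i := g]) + prodform \<beta> (fs[i := h])"
    unfolding prodform_upd[OF a(2) l] by (simp add: mu_add[OF b[OF a(2)]] distrib_right)
  show "prodform \<beta> (fs[i := fscale c g]) = c * prodform \<beta> (fs[i := g])"
    unfolding prodform_upd[OF a(2) l] by (simp add: mu_scale[OF b[OF a(2)]])
next
  fix fs assume a: "fs \<in> Args" "\<exists>i<m. fs ! i \<in> W"
  then obtain i where i: "i < m" "fs ! i \<in> W" by blast
  have l: "length fs = m" using a(1) args_iff by blast
  have "prodform \<beta> fs = prodform \<beta> (fs[i := fs ! i])" by simp
  also have "\<dots> = 0" unfolding prodform_upd[OF i(1) l] using mu_W[OF b[OF i(1)] i(2)] by simp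
  finally show "prodform \<beta> fs = 0" .
qed

definition Lam :: "(nat \<Rightarrow> nat) \<Rightarrow> 't \<Rightarrow> 'k" where
  "Lam \<beta> = (SOME l. Vector_Spaces.linear sT (*) l \<and> (\<forall>fs\<in>Args. l (\<iota> fs) = prodform \<beta> fs))"

lemma Lam:
  assumes "\<And>l. l < m \<Longrightarrow> \<beta> l < m"
  shows "Vector_Spaces.linear sT (*) (Lam \<beta>) \<and> (\<forall>fs\<in>Args. Lam \<beta> (\<iota> fs) = prodform \<beta> fs)"
proof -
  obtain l where "Vector_Spaces.linear sT (*) l" "\<forall>fs\<in>Args. prodform \<beta> fs = l (\<iota> fs)"
    using univ_iota[OF qml_prodform[of \<beta>, OF assms]] by blast
  then have "\<exists>l. Vector_Spaces.linear sT (*) l \<and> (\<forall>fs\<in>Args. l (\<iota> fs) = prodform \<beta> fs)" by auto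
  from someI_ex[OF this] show ?thesis unfolding Lam_def .
qed

lemma iota_scales:
  assumes es: "es \<in> Args"
  shows "\<iota> (map (\<lambda>l. fscale (a l) (es ! l)) [0..<m]) = sT (\<Prod>l<m. a l) (\<iota> es)"
proof -
  have les: "length es = m" using es args_iff by blast
  have "r \<le> m \<Longrightarrow> \<iota> (map (\<lambda>l. if l < r then fscale (a l) (es ! l) else es ! l) [0..<m]) = sT (\<Prod>l<r. a l) (\<iota> es)" for r
  proof (induct r)
    case 0
    have "map (\<lambda>l. if l < 0 then fscale (a l) (es ! l) else es ! l) [0..<m] = es"
      by (rule nth_equalityI) (auto simp: les)
    then show ?case by simp
  next
    case (Suc r)
    have r: "r < m" using Suc.prems by simp
    let ?lr = "map (\<lambda>l. if l < r then fscale (a l) (es ! l) else es ! l) [0..<m]"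
    have lr: "?lr \<in> Args" using es by (auto simp: args_iff ad_scale)
    have e1: "map (\<lambda>l. if l < Suc r then fscale (a l) (es ! l) else es ! l) [0..<m] = ?lr[r := fscale (a r) (?lr ! r)]"
      by (rule nth_equalityI) (auto simp: nth_list_update r)
    have e2: "\<iota> (?lr[r := fscale (a r) (?lr ! r)]) = sT (a r) (\<iota> (?lr[r := ?lr ! r]))"
    proof (rule iota_scale[OF lr r])
      have "?lr ! r = es ! r" using r by simp
      moreover have "es ! r \<in> Vd" using es r by (simp add: args_iff)
      ultimately show "?lr ! r \<in> Vd" by simp
    qed
    have e3: "?lr[r := ?lr ! r] = ?lr" by (rule list_update_id)
    have e4: "\<iota> ?lr = sT (\<Prod>l<r. a l) (\<iota> es)" by (rule Suc.hyps) (use r in simp)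
    have e5: "sT (a r) (sT (\<Prod>l<r. a l) (\<iota> es)) = sT (\<Prod>l<Suc r. a l) (\<iota> es)"
      by (simp only: T.scale_scale prod.lessThan_Suc mult.commute)
    have "\<iota> (map (\<lambda>l. if l < Suc r then fscale (a l) (es ! l) else es ! l) [0..<m]) = sT (\<Prod>l<Suc r. a l) (\<iota> es)"
      unfolding e1 e2 e3 e4 e5 ..
    then show ?case .
  qed
  from this[of m] have A: "\<iota> (map (\<lambda>l. if l < m then fscale (a l) (es ! l) else es ! l) [0..<m]) = sT (\<Prod>l<m. a l) (\<iota> es)"
    by simp
  have B: "map (\<lambda>l. if l < m then fscale (a l) (es ! l) else es ! l) [0..<m] =
      map (\<lambda>l. fscale (a l) (es ! l)) [0..<m]" by (rule map_cong) auto
  show ?thesis unfolding B[symmetric] by (rule A)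
qed

lemma good_q: "(\<And>l. l < m \<Longrightarrow> \<beta> l < m) \<Longrightarrow> good (\<lambda>l. q (\<beta> l))"
  by (simp add: good_def sm_q)

lemma MS_q_form:
  assumes b: "\<And>l. l < m \<Longrightarrow> \<beta> l < m"
  shows "MS (\<lambda>l. q (\<beta> l)) = (\<lambda>t. sT (Lam \<beta> t) (\<iota> (map (\<lambda>l. e (\<beta> l)) [0..<m])))"
proof (rule linT_eq)
  show "Vector_Spaces.linear sT sT (MS (\<lambda>l. q (\<beta> l)))" by (rule MS_lin[OF good_q[of \<beta>, OF b]])
  interpret La: linear sT "(*)" "Lam \<beta>" using Lam[of \<beta>, OF b] by blast
  show "Vector_Spaces.linear sT sT (\<lambda>t. sT (Lam \<beta> t) (\<iota> (map (\<lambda>l. e (\<beta> l)) [0..<m])))"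
    unfolding linear_iff using vsT by (simp add: La.add La.scale T.scale_left_distrib)
  fix fs assume fs: "fs \<in> Args"
  let ?es = "map (\<lambda>l. e (\<beta> l)) [0..<m]"
  have es: "?es \<in> Args" by (simp add: args_iff e_ad)
  have "appL (\<lambda>l. q (\<beta> l)) fs = map (\<lambda>l. fscale (mu (\<beta> l) (fs ! l)) (?es ! l)) [0..<m]"
    by (rule nth_equalityI) (auto simp: appL_nth q_def)
  then have "MS (\<lambda>l. q (\<beta> l)) (\<iota> fs) = sT (prodform \<beta> fs) (\<iota> ?es)"
    using MS_gen[OF good_q[of \<beta>, OF b] fs] iota_scales[OF es] by (simp add: prodform_def)
  also have "prodform \<beta> fs = Lam \<beta> (\<iota> fs)" using Lam[of \<beta>, OF b] fs by simp
  finally show "MS (\<lambda>l. q (\<beta> l)) (\<iota> fs) = sT (Lam \<beta> (\<iota> fs)) (\<iota> ?es)" .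
qed

lemma pin_all:
  assumes y: "\<And>k. k < m \<Longrightarrow> Aop (Psi k) y = 0"
    and b: "\<beta> \<in> PiM" "inj_on \<beta> {..<m}"
  shows "MS (\<lambda>i. proj (\<beta> i)) y =
     sT (Lam \<beta> (MS (\<lambda>i. proj (\<beta> i)) y)) (\<iota> (map (\<lambda>l. e (\<beta> l)) [0..<m]))"
proof -
  let ?z = "MS (\<lambda>i. proj (\<beta> i)) y"
  have bm: "\<And>l. l < m \<Longrightarrow> \<beta> l < m" using b(1) by auto
  have gR: "good (\<lambda>l. if l < r then q (\<beta> l) else id)" for r
    by (simp add: good_def sm_q bm sm_id)
  have "r \<le> m \<Longrightarrow> ?z = MS (\<lambda>l. if l < r then q (\<beta> l) else id) ?z" for r
  proof (induct r)
    case 0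
    have "(\<lambda>l::nat. if l < 0 then q (\<beta> l) else id) = (\<lambda>_. id)" by auto
    then show ?case by (simp add: MS_id MS_id[unfolded id_def])
  next
    case (Suc r)
    have r: "r < m" using Suc.prems by simp
    have gs: "good (slot r (q (\<beta> r)))" by (rule good_slot[OF sm_q[OF bm[OF r]]])
    have c1: "MS (\<lambda>l. if l < Suc r then q (\<beta> l) else id) = MS (\<lambda>l. (if l < r then q (\<beta> l) else id) \<circ> slot r (q (\<beta> r)) l)"
      by (rule MS_cong[OF gR good_comp[OF gR gs]]) (auto simp: slot_def)
    have c2: "MS (\<lambda>l. (if l < r then q (\<beta> l) else id) \<circ> slot r (q (\<beta> r)) l) ?z = MS (\<lambda>l. if l < r then q (\<beta> l) else id) (MS (slot r (q (\<beta> r))) ?z)"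
      by (rule MS_comp_apply[OF gR gs, symmetric])
    have c3: "MS (slot r (q (\<beta> r))) ?z = ?z" by (rule pin_slot[OF y b r, symmetric])
    have c4: "?z = MS (\<lambda>l. if l < r then q (\<beta> l) else id) ?z" by (rule Suc.hyps) (use r in simp)
    show ?case unfolding c1 c2 c3 by (rule c4)
  qed
  from this[of m] have d1: "?z = MS (\<lambda>l. if l < m then q (\<beta> l) else id) ?z" by simp
  have d2: "MS (\<lambda>l. if l < m then q (\<beta> l) else id) = MS (\<lambda>l. q (\<beta> l))"
    by (rule MS_cong[OF gR good_q[of \<beta>, OF bm]]) auto
  have d3: "MS (\<lambda>l. q (\<beta> l)) = (\<lambda>t. sT (Lam \<beta> t) (\<iota> (map (\<lambda>l. e (\<beta> l)) [0..<m])))"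
    by (rule MS_q_form[of \<beta>, OF bm])
  have "?z = MS (\<lambda>l. q (\<beta> l)) ?z" using d1 unfolding d2 .
  then show ?thesis unfolding d3 .
qed

end

context ctx begin

interpretation TT: vector_space_pair sT sT by unfold_locales

definition rst :: "(nat \<Rightarrow> nat) \<Rightarrow> nat \<Rightarrow> nat" where "rst \<sigma> = restrict (inv \<sigma>) {..<m}"
definition ext :: "(nat \<Rightarrow> nat) \<Rightarrow> nat \<Rightarrow> nat" where "ext \<beta> = (\<lambda>i. if i < m then \<beta> i else i)"

lemma ext_perm:
  assumes b: "\<beta> \<in> PiM" "inj_on \<beta> {..<m}"
  shows "ext \<beta> permutes {..<m}"
proof (rule bij_imp_permutes)
  have inj: "inj_on (ext \<beta>) {..<m}" using b(2) by (auto simp: inj_on_def ext_def)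
  have sub: "ext \<beta> ` {..<m} \<subseteq> {..<m}" using b(1) by (auto simp: ext_def)
  have "ext \<beta> ` {..<m} = {..<m}" by (rule endo_inj_surj[OF _ sub inj]) simp
  then show "bij_betw (ext \<beta>) {..<m} {..<m}" using inj by (simp add: bij_betw_def)
  show "ext \<beta> x = x" if "x \<notin> {..<m}" for x using that by (simp add: ext_def)
qed

lemma rst_PiM: assumes "\<sigma> \<in> Sym m" shows "rst \<sigma> \<in> PiM"
proof -
  have p: "inv \<sigma> permutes {..<m}" using assms Sym_iff permutes_inv by blast
  show ?thesis unfolding rst_def using permutes_in_image[OF p] by auto
qed

lemma rst_lt: "\<sigma> \<in> Sym m \<Longrightarrow> l < m \<Longrightarrow> rst \<sigma> l < m"
  using rst_PiM by auto

lemma rst_inj: "\<sigma> \<in> Sym m \<Longrightarrow> inj_on (rst \<sigma>) {..<m}"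
  unfolding rst_def Sym_iff
  using permutes_inj[OF permutes_inv] by (auto simp: inj_on_def inj_def)

lemma ext_rst: assumes "\<sigma> \<in> Sym m" shows "ext (rst \<sigma>) = inv \<sigma>"
proof
  fix i
  have p: "inv \<sigma> permutes {..<m}" using assms Sym_iff permutes_inv by blast
  show "ext (rst \<sigma>) i = inv \<sigma> i"
    using permutes_not_in[OF p, of i] by (auto simp: ext_def rst_def)
qed

lemma rst_ext: assumes b: "\<beta> \<in> PiM" "inj_on \<beta> {..<m}" shows "rst (inv (ext \<beta>)) = \<beta>"
proof
  fix i
  have "inv (inv (ext \<beta>)) = ext \<beta>" by (rule permutes_inv_inv[OF ext_perm[OF b]])
  then show "rst (inv (ext \<beta>)) i = \<beta> i"
    using b(1) by (auto simp: rst_def ext_def PiE_def extensional_def)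
qed

lemma sum_BI: "(\<Sum>\<beta>\<in>{\<beta> \<in> PiM. inj_on \<beta> {..<m}}. G \<beta>) = (\<Sum>\<sigma>\<in>Sym m. G (rst \<sigma>))"
proof (rule sum.reindex_bij_witness[where j="\<lambda>\<beta>. inv (ext \<beta>)" and i=rst])
  fix \<beta> assume b: "\<beta> \<in> {\<beta> \<in> PiM. inj_on \<beta> {..<m}}"
  show "rst (inv (ext \<beta>)) = \<beta>" using rst_ext b by blast
  show "inv (ext \<beta>) \<in> Sym m" using ext_perm b permutes_inv Sym_iff by blast
  show "G (rst (inv (ext \<beta>))) = G \<beta>" using rst_ext b by simp
next
  fix \<sigma> assume s: "\<sigma> \<in> Sym m"
  show "inv (ext (rst \<sigma>)) = \<sigma>" using ext_rst[OF s] permutes_inv_inv s Sym_iff by metis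
  show "rst \<sigma> \<in> {\<beta> \<in> PiM. inj_on \<beta> {..<m}}" using rst_PiM[OF s] rst_inj[OF s] by blast
qed

lemma P_x0: assumes s: "\<sigma> \<in> Sym m" shows "P \<sigma> x0 = \<iota> (map (\<lambda>l. e (rst \<sigma> l)) [0..<m])"
proof -
  have p: "inv \<sigma> permutes {..<m}" using s Sym_iff permutes_inv by blast
  have "permute_list (inv \<sigma>) xl = map (\<lambda>l. e (rst \<sigma> l)) [0..<m]"
  proof (rule nth_equalityI)
    fix l assume "l < length (permute_list (inv \<sigma>) xl)"
    then have l: "l < m" by simp
    have "inv \<sigma> l < m" using permutes_in_image[OF p] l by auto
    then show "permute_list (inv \<sigma>) xl ! l = map (\<lambda>l. e (rst \<sigma> l)) [0..<m] ! l"
      using perm_nth[OF s xl_len l] l by (simp add: xl_nth rst_def)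
  qed simp
  then show ?thesis using P_gen[OF s xl_args] by (simp add: x0_def)
qed

lemma surj_PR:
  assumes E: "E \<in> gl_end sV W sT m \<iota>"
  shows "\<exists>a\<in>grp_alg m. E = PR a"
proof -
  interpret El: linear sT sT E using gl_end_lin[OF E] .
  define y where "y = E x0"
  have comm: "E (Aop \<phi> t) = Aop \<phi> (E t)" if "\<phi> \<in> glM sV W" for \<phi> t
    using gl_end_commute[OF E that] by (metis comp_apply)
  have yD: "Aop (Dm k) y = - y" if k: "k < m" for k
    unfolding y_def using comm[OF Dm_glM, of k x0] Aop_Dm_x0[OF k] by (simp add: El.neg)
  have yP: "Aop (Psi k) y = 0" if k: "k < m" for k
    unfolding y_def using comm[OF Psi_glM, of k x0] Aop_Psi_x0 by (simp add: El.zero)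
  define c where "c \<beta> = Lam \<beta> (MS (\<lambda>i. proj (\<beta> i)) y)" for \<beta>
  define a where "a \<sigma> = (if \<sigma> \<in> Sym m then c (rst \<sigma>) else 0)" for \<sigma>
  have a: "a \<in> grp_alg m" by (simp add: grp_alg_def a_def)
  have fin: "finite PiM" by (rule finite_PiE) auto
  have "y = (\<Sum>\<beta>\<in>PiM. MS (\<lambda>i. proj (\<beta> i)) y)" by (rule expand[symmetric])
  also have "\<dots> = (\<Sum>\<beta>\<in>{\<beta> \<in> PiM. inj_on \<beta> {..<m}}. MS (\<lambda>i. proj (\<beta> i)) y)"
    by (rule sum.mono_neutral_right[OF fin]) (use kill[OF yD] in auto)
  also have "\<dots> = (\<Sum>\<beta>\<in>{\<beta> \<in> PiM. inj_on \<beta> {..<m}}. sT (c \<beta>) (\<iota> (map (\<lambda>l. e (\<beta> l)) [0..<m])))"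
    by (rule sum.cong[OF refl]) (use pin_all[OF yP] in \<open>auto simp: c_def\<close>)
  also have "\<dots> = (\<Sum>\<sigma>\<in>Sym m. sT (c (rst \<sigma>)) (\<iota> (map (\<lambda>l. e (rst \<sigma> l)) [0..<m])))"
    by (rule sum_BI)
  also have "\<dots> = PR a x0"
    unfolding PR_apply by (rule sum.cong[OF refl]) (simp add: a_def P_x0)
  finally have yPR: "E x0 = PR a x0" by (simp add: y_def)
  define D where "D t = E t - PR a t" for t
  have Dlin: "Vector_Spaces.linear sT sT D"
    unfolding D_def[abs_def] by (rule TT.linear_compose_sub[OF gl_end_lin[OF E] PR_lin])
  have "D = (\<lambda>_. 0)"
  proof (rule cyclic[OF Dlin])
    fix \<phi> assume phi: "\<phi> \<in> glM sV W"
    interpret Al: linear sT sT "Aop \<phi>" using Aop_lin[OF phi] .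
    show "D \<circ> Aop \<phi> = Aop \<phi> \<circ> D"
    proof
      fix t
      have "PR a (Aop \<phi> t) = Aop \<phi> (PR a t)" using PR_commute[OF phi, of a] by (metis comp_apply)
      then show "(D \<circ> Aop \<phi>) t = (Aop \<phi> \<circ> D) t" by (simp add: D_def comm[OF phi] Al.diff)
    qed
  next
    show "D x0 = 0" by (simp add: D_def yPR)
  qed
  then have "E = PR a" by (auto simp: D_def fun_eq_iff)
  with a show ?thesis by blast
qed

lemma Lam_P:
  assumes s: "\<sigma> \<in> Sym m" and t: "\<tau> \<in> Sym m"
  shows "Lam (rst \<tau>) (P \<sigma> x0) = (if \<sigma> = \<tau> then 1 else 0)"
proof -
  let ?es = "map (\<lambda>l. e (rst \<sigma> l)) [0..<m]"
  have es: "?es \<in> Args" by (simp add: args_iff e_ad)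
  have "Lam (rst \<tau>) (P \<sigma> x0) = prodform (rst \<tau>) ?es"
    using Lam[of "rst \<tau>", OF rst_lt[OF t]] es by (simp add: P_x0[OF s])
  also have "\<dots> = (\<Prod>l<m. if rst \<sigma> l = rst \<tau> l then 1 else 0)"
    unfolding prodform_def by (rule prod.cong[OF refl]) (simp add: mu_e rst_lt[OF t])
  also have "\<dots> = (if \<sigma> = \<tau> then 1 else 0)"
  proof (cases "\<sigma> = \<tau>")
    case True
    then show ?thesis by simp
  next
    case False
    have "\<exists>l<m. rst \<sigma> l \<noteq> rst \<tau> l"
    proof (rule ccontr)
      assume "\<not> (\<exists>l<m. rst \<sigma> l \<noteq> rst \<tau> l)"
      then have "rst \<sigma> = rst \<tau>" by (auto simp: rst_def fun_eq_iff)
      then have "inv \<sigma> = inv \<tau>" using ext_rst[OF s] ext_rst[OF t] by metis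
      then have "\<sigma> = \<tau>" using permutes_inv_inv s t Sym_iff by metis
      with False show False by simp
    qed
    then obtain l where l: "l < m" "rst \<sigma> l \<noteq> rst \<tau> l" by blast
    have "(\<Prod>l<m. if rst \<sigma> l = rst \<tau> l then 1 else 0) = (0::'k)"
      by (rule prod_zero) (use l in auto)
    then show ?thesis using False by simp
  qed
  finally show ?thesis .
qed

lemma Lam_PR: assumes t: "\<tau> \<in> Sym m" shows "Lam (rst \<tau>) (PR a x0) = a \<tau>"
proof -
  interpret La: linear sT "(*)" "Lam (rst \<tau>)" using Lam[of "rst \<tau>", OF rst_lt[OF t]] by blast
  have "Lam (rst \<tau>) (PR a x0) = (\<Sum>\<sigma>\<in>Sym m. a \<sigma> * (if \<sigma> = \<tau> then 1 else 0))"
    unfolding PR_apply La.sum La.scale by (rule sum.cong[OF refl]) (simp add: Lam_P t)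
  also have "\<dots> = a \<tau>" using t finite_Sym by (simp add: sum.delta if_distrib cong: if_cong)
  finally show ?thesis .
qed

lemma inj_PR: "inj_on PR (grp_alg m)"
proof (rule inj_onI)
  fix a b assume a: "a \<in> grp_alg m" and b: "b \<in> grp_alg m" and eq: "PR a = PR b"
  show "a = b"
  proof
    fix \<tau>
    show "a \<tau> = b \<tau>"
    proof (cases "\<tau> \<in> Sym m")
      case True
      then show ?thesis using Lam_PR[OF True, of a] Lam_PR[OF True, of b] eq by simp
    next
      case False
      then show ?thesis using a b by (simp add: grp_alg_def)
    qed
  qed
qed

theorem main:
  "bij_betw PR (grp_alg m) (gl_end sV W sT m \<iota>)
       \<and> (\<forall>a\<in>grp_alg m. \<forall>b\<in>grp_alg m. PR (ga_mult m a b) = PR a \<circ> PR b)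
       \<and> (\<forall>a\<in>grp_alg m. \<forall>b\<in>grp_alg m. \<forall>c.
            PR (\<lambda>\<sigma>. a \<sigma> + c * b \<sigma>) = (\<lambda>t. PR a t + sT c (PR b t)))
       \<and> PR ga_one = id"
proof (intro conjI ballI allI)
  show "bij_betw PR (grp_alg m) (gl_end sV W sT m \<iota>)"
    unfolding bij_betw_def
  proof
    show "inj_on PR (grp_alg m)" by (rule inj_PR)
    show "PR ` grp_alg m = gl_end sV W sT m \<iota>"
      using PR_gl_end surj_PR by blast
  qed
qed (auto simp: clause2 clause3 clause4)

end

theorem proposition3p2:
  fixes sV :: "'k::field_char_0 \<Rightarrow> 'v::ab_group_add \<Rightarrow> 'v"
    and W :: "('v \<Rightarrow> 'k) set"
    and sT :: "'k \<Rightarrow> 't::ab_group_add \<Rightarrow> 't"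
    and \<iota> :: "('v \<Rightarrow> 'k) list \<Rightarrow> 't"
    and m :: nat
  assumes "mackey_pair sV W"
    and "is_quot_tensor_power sV W sT m \<iota>"
  shows "bij_betw (perm_rep sV sT m \<iota>) (grp_alg m) (gl_end sV W sT m \<iota>)
       \<and> (\<forall>a\<in>grp_alg m. \<forall>b\<in>grp_alg m.
            perm_rep sV sT m \<iota> (ga_mult m a b) = perm_rep sV sT m \<iota> a \<circ> perm_rep sV sT m \<iota> b)
       \<and> (\<forall>a\<in>grp_alg m. \<forall>b\<in>grp_alg m. \<forall>c.
            perm_rep sV sT m \<iota> (\<lambda>\<sigma>. a \<sigma> + c * b \<sigma>)
              = (\<lambda>t. perm_rep sV sT m \<iota> a t + sT c (perm_rep sV sT m \<iota> b t)))
       \<and> perm_rep sV sT m \<iota> ga_one = id"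
proof -
  interpret ctx sV W sT \<iota> m by unfold_locales (fact assms(1), fact assms(2))
  show ?thesis by (rule main)
qed

end
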